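(* In the model described in the context, with $\tilde k(p)=(1+\theta)p^c$ for $0<c<1$ and $\theta\ge0$, suppose $\lambda(1-c)<\gamma$. Then the optimal indemnity is $$I^*(x)=\Big(1-\frac{\lambda(1-c)}{\gamma}\Big)(x-d^* )_+,$$ where $d^*\ge0$ is the unique non-negative solution $d$ of the following equation. If $\lambda\ne\gamma$: $$e^{(\gamma-\lambda)d}\Big\{q^{1-c}e^{\lambda cd}-(1+\theta)q\,\frac{\gamma-\lambda(1-c)}{\gamma-\lambda}\Big\}=c(1+\theta)\Big(1-\frac{q\gamma}{\gamma-\lambda}\Big).$$ If $\lambda=\gamma$: $$q^{1-c}e^{\lambda cd}-(1+\theta)q\lambda cd=(1+\theta)\big(c+(1-c)q\big).$$ Furthermore, $d^*>0$ if and only if either $q<1$ or $\theta>0$.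
   Context: Let $X\ge0$ be a random variable with $\mathbb{P}(X=0)=1-q$, where $q\in(0,1]$, and with density $q\lambda e^{-\lambda x}$ on $(0,\infty)$, where $\lambda>0$. So $S_X(t)=qe^{-\lambda t}$ for $t\ge0$. $\mathcal{I}_c$ is the set of $I:[0,\infty)\to[0,\infty)$ with $0\le I(x)\le x$ and $0\le I(x)-I(y)\le x-y$ for $0\le y\le x$. For $Y\ge0$ with $S_Y(t)=\mathbb{P}(Y>t)$, the premium is $$\pi(Y)=\int_0^\infty\tilde k(S_Y(t))\,dt.$$ The buyer has wealth $w$ and utility $u$ with $u'(x)=e^{-\gamma x}$, $\gamma>0$. She chooses $I\in\mathcal{I}_c$ to maximize $\mathbb{E}[u(w-X+I(X)-\pi(I(X)))]$; the buyer's distortion is the identity. The optimal indemnity is unique up to $\mathbb{P}$-a.s. equality of $I(X)$. *)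

theory Defs
  imports "HOL-Analysis.Analysis"
begin

definition Ic :: "(real \<Rightarrow> real) set" where
  "Ic = {I. \<forall>x\<ge>0. 0 \<le> I x \<and> I x \<le> x \<and>
           (\<forall>y. 0 \<le> y \<and> y \<le> x \<longrightarrow> 0 \<le> I x - I y \<and> I x - I y \<le> x - y)}"

text \<open>Law of X: atom of mass 1-q at 0 and density q*lam*exp(-lam*x) on (0,inf).
  Expectation of f(X) and integrability of f(X).\<close>
definition ExpX :: "real \<Rightarrow> real \<Rightarrow> (real \<Rightarrow> real) \<Rightarrow> real" where
  "ExpX q lam f = (1 - q) * f 0 + q * (LINT x:{0<..}|lborel. lam * exp (- lam * x) * f x)"

definition integrableX :: "real \<Rightarrow> real \<Rightarrow> (real \<Rightarrow> real) \<Rightarrow> bool" where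
  "integrableX q lam f = set_integrable lborel {0<..} (\<lambda>x. lam * exp (- lam * x) * f x)"

definition survI :: "real \<Rightarrow> real \<Rightarrow> (real \<Rightarrow> real) \<Rightarrow> real \<Rightarrow> real" where
  "survI q lam I t = ExpX q lam (\<lambda>x. of_bool (I x > t))"

definition premium :: "(real \<Rightarrow> real) \<Rightarrow> real \<Rightarrow> real \<Rightarrow> (real \<Rightarrow> real) \<Rightarrow> real" where
  "premium k q lam I = (LINT t:{0..}|lborel. k (survI q lam I t))"

definition ktilde :: "real \<Rightarrow> real \<Rightarrow> real \<Rightarrow> real" where
  "ktilde \<theta> c p = (1 + \<theta>) * p powr c"

definition wealthFun :: "(real \<Rightarrow> real) \<Rightarrow> real \<Rightarrow> real \<Rightarrow> real \<Rightarrow> (real \<Rightarrow> real) \<Rightarrow> real \<Rightarrow> real" where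
  "wealthFun k w q lam I x = w - x + I x - premium k q lam I"

text \<open>Expected utility E[u(w - X + I(X) - pi(I(X)))].  Since u is bounded above,
  a non-integrable utility has expected value -infinity; this is encoded in optimalI.\<close>
definition EU :: "(real \<Rightarrow> real) \<Rightarrow> (real \<Rightarrow> real) \<Rightarrow> real \<Rightarrow> real \<Rightarrow> real \<Rightarrow> (real \<Rightarrow> real) \<Rightarrow> real" where
  "EU u k w q lam I = ExpX q lam (\<lambda>x. u (wealthFun k w q lam I x))"

definition optimalI :: "(real \<Rightarrow> real) \<Rightarrow> (real \<Rightarrow> real) \<Rightarrow> real \<Rightarrow> real \<Rightarrow> real \<Rightarrow> (real \<Rightarrow> real) \<Rightarrow> bool" where
  "optimalI u k w q lam I \<longleftrightarrow> I \<in> Ic \<and>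
     integrableX q lam (\<lambda>x. u (wealthFun k w q lam I x)) \<and>
     (\<forall>J\<in>Ic. integrableX q lam (\<lambda>x. u (wealthFun k w q lam J x)) \<longrightarrow>
        EU u k w q lam J \<le> EU u k w q lam I)"

definition dEq :: "real \<Rightarrow> real \<Rightarrow> real \<Rightarrow> real \<Rightarrow> real \<Rightarrow> real \<Rightarrow> bool" where
  "dEq q lam \<gamma> c \<theta> d \<longleftrightarrow>
    (if lam \<noteq> \<gamma> then
       exp ((\<gamma> - lam) * d) * (q powr (1 - c) * exp (lam * c * d)
          - (1 + \<theta>) * q * (\<gamma> - lam * (1 - c)) / (\<gamma> - lam))
       = c * (1 + \<theta>) * (1 - q * \<gamma> / (\<gamma> - lam))
     else
       q powr (1 - c) * exp (lam * c * d) - (1 + \<theta>) * q * lam * c * d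
       = (1 + \<theta>) * (c + (1 - c) * q))"

end

theory Submission
  imports Defs
begin

definition Bf :: "real \<Rightarrow> real \<Rightarrow> real \<Rightarrow> real" where
  "Bf lam \<gamma> d = (if \<gamma> = lam then d else (exp ((\<gamma> - lam) * d) - 1) / (\<gamma> - lam))"

definition Ecl :: "real \<Rightarrow> real \<Rightarrow> real \<Rightarrow> real \<Rightarrow> real \<Rightarrow> real" where
  "Ecl q lam \<gamma> c d = 1 - q + q * lam * Bf lam \<gamma> d + q * exp ((\<gamma> - lam) * d) / c"

definition FOC :: "real \<Rightarrow> real \<Rightarrow> real \<Rightarrow> real \<Rightarrow> real \<Rightarrow> real \<Rightarrow> bool" where
  "FOC q lam \<gamma> c \<theta> d \<longleftrightarrow> c * (1 + \<theta>) * Ecl q lam \<gamma> c d = q powr (1 - c) * exp ((\<gamma> - lam * (1 - c)) * d)"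

definition Psi :: "real \<Rightarrow> real \<Rightarrow> real \<Rightarrow> real \<Rightarrow> real \<Rightarrow> real \<Rightarrow> real" where
  "Psi q lam \<gamma> c \<theta> d = q powr (1 - c) * exp ((\<gamma> - lam * (1 - c)) * d) - c * (1 + \<theta>) * Ecl q lam \<gamma> c d"

lemma dEq_iff_FOC:
  assumes "0 < c"
  shows "dEq q lam \<gamma> c \<theta> d \<longleftrightarrow> FOC q lam \<gamma> c \<theta> d"
proof -
  have e: "exp ((\<gamma> - lam * (1 - c)) * d) = exp ((\<gamma> - lam) * d) * exp (lam * c * d)"
    by (simp add: mult_exp_exp algebra_simps)
  show ?thesis
  proof (cases "\<gamma> = lam")
    case True
    have k: "c * (1 + \<theta>) * Ecl q lam \<gamma> c d = (1 + \<theta>) * (c + (1 - c) * q) + (1 + \<theta>) * q * lam * c * d"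
      unfolding Ecl_def Bf_def using True assms by (simp add: field_simps)
    have e2: "exp ((\<gamma> - lam * (1 - c)) * d) = exp (lam * c * d)" using True by (simp add: algebra_simps)
    show ?thesis unfolding dEq_def FOC_def k e2 using True by auto
  next
    case False
    then have ne: "\<gamma> - lam \<noteq> 0" by simp
    have k: "c * (1 + \<theta>) * Ecl q lam \<gamma> c d = c * (1 + \<theta>) * (1 - q * \<gamma> / (\<gamma> - lam))
       + exp ((\<gamma> - lam) * d) * ((1 + \<theta>) * q * (\<gamma> - lam * (1 - c)) / (\<gamma> - lam))"
    proof -
      define D where "D = \<gamma> - lam"
      define E where "E = exp ((\<gamma> - lam) * d)"
      have g: "\<gamma> = D + lam" and D0: "D \<noteq> 0" using ne unfolding D_def by auto
      show ?thesis unfolding Ecl_def Bf_def E_def[symmetric] using False unfolding g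
        using D0 assms by (simp add: field_simps)
    qed
    show ?thesis unfolding dEq_def FOC_def k e using False by (simp add: algebra_simps) linarith
  qed
qed

lemma Psi_FOC: "Psi q lam \<gamma> c \<theta> d = 0 \<longleftrightarrow> FOC q lam \<gamma> c \<theta> d"
  unfolding Psi_def FOC_def by auto

lemma bern_strict:
  fixes q c :: real
  assumes "0 < q" "q < 1" "0 < c" "c < 1"
  shows "q powr (1 - c) < c + (1 - c) * q"
proof -
  define f where "f x = c + (1 - c) * x - x powr (1 - c)" for x :: real
  have der: "DERIV f x :> (1 - c) - (1 - c) * x powr (1 - c - 1)" if "q \<le> x" for x
    unfolding f_def using that assms
    by (auto intro!: derivative_eq_intros has_real_derivative_powr)
  obtain z where z: "q < z" "z < 1" "f 1 - f q = (1 - q) * ((1 - c) - (1 - c) * z powr (1 - c - 1))"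
    using MVT2[OF assms(2) der] by auto
  have "z powr (1 - c - 1) > 1"
    using powr_less_mono2_neg[of "-c" z 1] z assms by simp
  then have "(1 - c) - (1 - c) * z powr (1 - c - 1) < 0" using assms by simp
  then have "f 1 - f q < 0" using z assms by (simp add: mult_pos_neg)
  moreover have "f 1 = 0" unfolding f_def by simp
  ultimately show ?thesis unfolding f_def by simp
qed

lemma Psi0:
  assumes "0 < q" "q \<le> 1" "0 < c" "c < 1" "0 \<le> \<theta>"
  shows "Psi q lam \<gamma> c \<theta> 0 \<le> 0" and "Psi q lam \<gamma> c \<theta> 0 = 0 \<longleftrightarrow> q = 1 \<and> \<theta> = 0"
proof -
  have P: "Psi q lam \<gamma> c \<theta> 0 = q powr (1 - c) - (1 + \<theta>) * (c + (1 - c) * q)"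
    unfolding Psi_def Ecl_def Bf_def using assms by (simp add: field_simps)
  have Y: "q powr (1 - c) \<le> (1 - c) * q + c"
    using Youngs_inequality_0[of "1 - c" c q 1] assms by simp
  have pos: "0 < c + (1 - c) * q" using assms by (simp add: add_pos_nonneg)
  have "0 \<le> \<theta> * (c + (1 - c) * q)" using pos assms by simp
  then have m: "c + (1 - c) * q \<le> (1 + \<theta>) * (c + (1 - c) * q)"
    by (simp add: algebra_simps)
  show "Psi q lam \<gamma> c \<theta> 0 \<le> 0" unfolding P using Y m by simp
  show "Psi q lam \<gamma> c \<theta> 0 = 0 \<longleftrightarrow> q = 1 \<and> \<theta> = 0"
  proof
    assume h: "Psi q lam \<gamma> c \<theta> 0 = 0"
    have "q = 1"
    proof (rule ccontr)
      assume "q \<noteq> 1" then have "q < 1" using assms by simp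
      from bern_strict[OF assms(1) this assms(3,4)] h m show False unfolding P by simp
    qed
    moreover have "\<theta> = 0"
    proof (rule ccontr)
      assume "\<theta> \<noteq> 0" then have "\<theta> > 0" using assms by simp
      then have "c + (1 - c) * q < (1 + \<theta>) * (c + (1 - c) * q)" using pos by simp
      with h Y show False unfolding P by simp
    qed
    ultimately show "q = 1 \<and> \<theta> = 0" ..
  next
    assume "q = 1 \<and> \<theta> = 0" then show "Psi q lam \<gamma> c \<theta> 0 = 0" unfolding P by simp
  qed
qed

lemma lin_at_top: "r > 0 \<Longrightarrow> filterlim (\<lambda>x::real. r * x) at_top at_top"
  by (rule filterlim_tendsto_pos_mult_at_top[OF tendsto_const]) (auto simp: filterlim_ident)

lemma exp_neg_lim: "r > 0 \<Longrightarrow> ((\<lambda>x::real. exp (- r * x)) \<longlongrightarrow> 0) at_top"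
proof -
  assume r: "r > 0"
  have "filterlim (\<lambda>x::real. - (r * x)) at_bot at_top"
    by (rule filterlim_compose[OF filterlim_uminus_at_bot_at_top lin_at_top[OF r]])
  from filterlim_compose[OF exp_at_bot this] show ?thesis by simp
qed

lemma xexp_neg_lim: "r > 0 \<Longrightarrow> ((\<lambda>x::real. x * exp (- r * x)) \<longlongrightarrow> 0) at_top"
proof -
  assume r: "r > 0"
  have "((\<lambda>x::real. (r * x) ^ 1 / exp (r * x)) \<longlongrightarrow> 0) at_top"
    by (rule filterlim_compose[OF tendsto_power_div_exp_0 lin_at_top[OF r]])
  then have "((\<lambda>x::real. (1 / r) * ((r * x) ^ 1 / exp (r * x))) \<longlongrightarrow> (1 / r) * 0) at_top"
    by (intro tendsto_mult tendsto_const)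
  moreover have "(\<lambda>x::real. (1 / r) * ((r * x) ^ 1 / exp (r * x))) = (\<lambda>x. x * exp (- r * x))"
    using r by (auto simp: fun_eq_iff exp_minus field_simps)
  ultimately show ?thesis by simp
qed

lemma Psi_cont: "c \<noteq> 0 \<Longrightarrow> continuous_on S (Psi q lam \<gamma> c \<theta>)"
  unfolding Psi_def Ecl_def Bf_def
  by (cases "\<gamma> = lam") (auto intro!: continuous_intros)

lemma Psi_root:
  assumes "0 < q" "q \<le> 1" "0 < lam" "0 < c" "c < 1" "0 \<le> \<theta>" "lam * (1 - c) < \<gamma>"
  shows "\<exists>d\<ge>0. Psi q lam \<gamma> c \<theta> d = 0"
proof -
  define \<beta> where "\<beta> = \<gamma> - lam * (1 - c)"
  have b0: "\<beta> > 0" using assms unfolding \<beta>_def by simp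
  have lc0: "lam * c > 0" using assms by simp
  define h where "h d = Psi q lam \<gamma> c \<theta> d * exp (- \<beta> * d)" for d
  have q0: "q powr (1 - c) > 0" using assms by simp
  have hlim: "(h \<longlongrightarrow> q powr (1 - c)) at_top"
  proof (cases "\<gamma> = lam")
    case True
    have "h d = q powr (1 - c) - c * (1 + \<theta>) * ((1 - q) * exp (- \<beta> * d) + q * lam * (d * exp (- \<beta> * d)))
       - (1 + \<theta>) * q * exp (- (lam * c) * d)" for d
      unfolding h_def Psi_def Ecl_def Bf_def using True assms
      by (simp add: field_simps \<beta>_def flip: exp_add)
    then have e: "h = (\<lambda>d. q powr (1 - c) - c * (1 + \<theta>) * ((1 - q) * exp (- \<beta> * d) + q * lam * (d * exp (- \<beta> * d)))
       - (1 + \<theta>) * q * exp (- (lam * c) * d))" by auto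
    have "((\<lambda>d. q powr (1 - c) - c * (1 + \<theta>) * ((1 - q) * exp (- \<beta> * d) + q * lam * (d * exp (- \<beta> * d)))
       - (1 + \<theta>) * q * exp (- (lam * c) * d)) \<longlongrightarrow> q powr (1 - c) - c * (1 + \<theta>) * ((1 - q) * 0 + q * lam * 0)
       - (1 + \<theta>) * q * 0) at_top"
      by (intro tendsto_intros exp_neg_lim xexp_neg_lim b0 lc0)
    then show ?thesis unfolding e by simp
  next
    case False
    have ne: "\<gamma> - lam \<noteq> 0" using False by simp
    have "h d = q powr (1 - c) - c * (1 + \<theta>) * ((1 - q) * exp (- \<beta> * d) + q * lam * ((exp (- (lam * c) * d) - exp (- \<beta> * d)) / (\<gamma> - lam)))
       - (1 + \<theta>) * q * exp (- (lam * c) * d)" for d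
    proof -
      define Eb where "Eb = exp (\<beta> * d)"
      define Em where "Em = exp (- \<beta> * d)"
      define E1 where "E1 = exp ((\<gamma> - lam) * d)"
      define Ec where "Ec = exp (- (lam * c) * d)"
      have f1: "Eb * Em = 1" unfolding Eb_def Em_def by (simp flip: exp_add)
      have f2: "E1 * Em = Ec" unfolding E1_def Em_def Ec_def \<beta>_def by (simp add: algebra_simps flip: exp_add)
      have "h d = (q powr (1 - c) * Eb - c * (1 + \<theta>) * (1 - q + q * lam * ((E1 - 1) / (\<gamma> - lam)) + q * E1 / c)) * Em"
        unfolding h_def Psi_def Ecl_def Bf_def Eb_def Em_def E1_def \<beta>_def using False by simp
      also have "\<dots> = q powr (1 - c) * (Eb * Em) - c * (1 + \<theta>) * ((1 - q) * Em + q * lam * ((E1 * Em - Em) / (\<gamma> - lam)))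
         - (1 + \<theta>) * q * (E1 * Em)"
        using assms ne by (simp add: field_simps)
      also have "\<dots> = q powr (1 - c) - c * (1 + \<theta>) * ((1 - q) * Em + q * lam * ((Ec - Em) / (\<gamma> - lam)))
         - (1 + \<theta>) * q * Ec" unfolding f1 f2 by simp
      finally show ?thesis unfolding Em_def Ec_def .
    qed
    then have e: "h = (\<lambda>d. q powr (1 - c) - c * (1 + \<theta>) * ((1 - q) * exp (- \<beta> * d) + q * lam * ((exp (- (lam * c) * d) - exp (- \<beta> * d)) / (\<gamma> - lam)))
       - (1 + \<theta>) * q * exp (- (lam * c) * d))" by auto
    have "((\<lambda>d. q powr (1 - c) - c * (1 + \<theta>) * ((1 - q) * exp (- \<beta> * d) + q * lam * ((exp (- (lam * c) * d) - exp (- \<beta> * d)) / (\<gamma> - lam)))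
       - (1 + \<theta>) * q * exp (- (lam * c) * d)) \<longlongrightarrow> q powr (1 - c) - c * (1 + \<theta>) * ((1 - q) * 0 + q * lam * ((0 - 0) / (\<gamma> - lam)))
       - (1 + \<theta>) * q * 0) at_top"
      by (intro tendsto_intros exp_neg_lim b0 lc0 ne)
    then show ?thesis unfolding e using ne by simp
  qed
  have "eventually (\<lambda>d. 0 < h d) at_top"
    using order_tendstoD(1)[OF hlim q0] .
  then obtain N where N: "\<And>d. d \<ge> N \<Longrightarrow> 0 < h d" by (auto simp: eventually_at_top_linorder)
  define D where "D = max N 0"
  have "0 < h D" using N unfolding D_def by simp
  then have PD: "0 \<le> Psi q lam \<gamma> c \<theta> D" unfolding h_def by (simp add: zero_less_mult_iff)
  have P0: "Psi q lam \<gamma> c \<theta> 0 \<le> 0" using Psi0 assms by simp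
  obtain x where "0 \<le> x" "x \<le> D" "Psi q lam \<gamma> c \<theta> x = 0"
    using IVT'[OF P0 PD _ Psi_cont] assms unfolding D_def by auto
  then show ?thesis by auto
qed

lemma hasint_set:
  fixes f :: "real \<Rightarrow> real"
  assumes fm[measurable]: "f \<in> borel_measurable borel" and A[measurable]: "A \<in> sets borel"
    and nn: "\<And>x. x \<in> A \<Longrightarrow> 0 \<le> f x" and h: "(f has_integral r) A"
  shows "set_integrable lborel A f" "(LINT x:A|lborel. f x) = r"
proof -
  have N: "(\<integral>\<^sup>+x. ennreal (f x) * indicator A x \<partial>lborel) = ennreal r"
    using nn_integral_has_integral_lebesgue'[OF nn h] .
  have r0: "0 \<le> r" using has_integral_nonneg[OF h] nn by auto
  have N2: "(\<integral>\<^sup>+x. ennreal (norm (indicator A x *\<^sub>R f x)) \<partial>lborel) = ennreal r"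
    unfolding N[symmetric] by (intro nn_integral_cong) (auto simp: indicator_def nn)
  show si: "set_integrable lborel A f" unfolding set_integrable_def
    by (rule integrableI_bounded) (use N2 in simp_all)
  have N3: "(\<integral>\<^sup>+x. ennreal (indicator A x *\<^sub>R f x) \<partial>lborel) = ennreal r"
    unfolding N[symmetric] by (intro nn_integral_cong) (auto simp: indicator_def nn)
  show "(LINT x:A|lborel. f x) = r" unfolding set_lebesgue_integral_def
    by (subst integral_eq_nn_integral) (use N3 r0 nn in \<open>auto simp: indicator_def\<close>)
qed

lemma hasint_tail:
  fixes K r t :: real
  assumes "r > 0"
  shows "((\<lambda>x. K * exp (- r * x)) has_integral K * exp (- r * t) / r) {t..}"
  using has_integral_mult_right[OF has_integral_exp_minus_to_infinity[OF assms, of t], of K]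
  by simp

lemma tail_int:
  fixes K r t :: real
  assumes "r > 0" "K \<ge> 0"
  shows "set_integrable lborel {t..} (\<lambda>x. K * exp (- r * x))"
    "(LINT x:{t..}|lborel. K * exp (- r * x)) = K * exp (- r * t) / r"
    "(\<integral>\<^sup>+x. ennreal (K * exp (- r * x)) * indicator {t..} x \<partial>lborel) = ennreal (K * exp (- r * t) / r)"
  using hasint_set[OF _ _ _ hasint_tail[OF assms(1)], of K t] assms
    nn_integral_has_integral_lebesgue'[where f="\<lambda>x. K * exp (- r * x)" and \<Omega>="{t..}", OF _ hasint_tail[OF assms(1)]]
  by auto

lemma AE_point_in_interval:
  assumes "AE x in lborel. P x" "a < (b::real)"
  shows "\<exists>x. a < x \<and> x < b \<and> P x"
proof (rule ccontr)
  assume n: "\<not> ?thesis"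
  from assms(1) have "AE x in lborel. x \<notin> {a<..<b}" by eventually_elim (use n in auto)
  then have "{a<..<b} \<in> null_sets lborel"
    by (subst AE_iff_null_sets) auto
  then show False using assms(2) by (simp add: null_sets_def)
qed

locale model =
  fixes q lam \<gamma> c \<theta> d :: real
  assumes q0: "0 < q" and q1: "q \<le> 1" and lam0: "0 < lam" and g0: "0 < \<gamma>"
    and c0: "0 < c" and c1: "c < 1" and th0: "0 \<le> \<theta>" and lc: "lam * (1 - c) < \<gamma>"
    and d0: "0 \<le> d" and foc: "FOC q lam \<gamma> c \<theta> d"
begin

definition "aa = 1 - lam * (1 - c) / \<gamma>"
definition "bet = \<gamma> - lam * (1 - c)"
definition "Is x = aa * max (x - d) 0"
definition "rho x = exp (\<gamma> * (x - Is x))"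
definition "gw x = lam * exp (- lam * x) * rho x"

lemma bet_pos: "bet > 0" using lc unfolding bet_def by simp
lemma bet_aa: "bet = \<gamma> * aa" unfolding bet_def aa_def using g0 by (simp add: field_simps)
lemma aa_pos: "aa > 0" using bet_pos bet_aa g0 by (simp add: zero_less_mult_iff)
lemma aa_le1: "aa \<le> 1" unfolding aa_def using lam0 c1 g0 by simp

lemma Is_0[simp]: "Is 0 = 0" unfolding Is_def using d0 by simp
lemma Is_nonneg: "0 \<le> Is x" unfolding Is_def using aa_pos by simp
lemma Is_le: "0 \<le> x \<Longrightarrow> Is x \<le> x"
  unfolding Is_def using aa_pos aa_le1 d0
  by (smt (verit, best) max.bounded_iff mult_left_le_one_le)
lemma Is_cont: "continuous_on S Is" unfolding Is_def by (intro continuous_intros)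
lemma Is_meas[measurable]: "Is \<in> borel_measurable borel"
  by (intro borel_measurable_continuous_onI Is_cont)
lemma rho_meas[measurable]: "rho \<in> borel_measurable borel" unfolding rho_def by measurable
lemma gw_meas[measurable]: "gw \<in> borel_measurable borel" unfolding gw_def by measurable
lemma rho_pos: "rho x > 0" unfolding rho_def by simp
lemma gw_pos: "gw x > 0" unfolding gw_def using lam0 rho_pos by simp
lemma rho_0[simp]: "rho 0 = 1" unfolding rho_def by simp

lemma gw_eq: "gw x = lam * exp (- lam * x + \<gamma> * (x - Is x))"
  unfolding gw_def rho_def by (simp add: mult_exp_exp)

lemma gw_bound: "gw x \<le> lam * exp (bet * d - lam * c * x)"
  and gw_tail: "x \<ge> d \<Longrightarrow> gw x = lam * exp (bet * d - lam * c * x)"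
proof -
  show "x \<ge> d \<Longrightarrow> gw x = lam * exp (bet * d - lam * c * x)"
  proof -
    assume "x \<ge> d"
    then have Ix: "Is x = aa * (x - d)" unfolding Is_def by simp
    have "\<gamma> * (x - Is x) = \<gamma> * x - bet * x + bet * d" unfolding bet_aa Ix by (simp add: algebra_simps)
    then have "- lam * x + \<gamma> * (x - Is x) = bet * d - lam * c * x"
      unfolding bet_def by (simp add: algebra_simps)
    then show ?thesis unfolding gw_eq by simp
  qed
  show "gw x \<le> lam * exp (bet * d - lam * c * x)"
  proof (cases "x \<ge> d")
    case True then show ?thesis using \<open>x \<ge> d \<Longrightarrow> _\<close> by simp
  next
    case False
    then have "Is x = 0" unfolding Is_def by simp
    then have e: "- lam * x + \<gamma> * (x - Is x) = bet * x - lam * c * x" unfolding bet_def by (simp add: algebra_simps)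
    have "bet * x \<le> bet * d" using False bet_pos by simp
    then show ?thesis unfolding gw_eq e using lam0 by simp
  qed
qed

lemma gw_dom_eq: "lam * exp (bet * d - lam * c * x) = (lam * exp (bet * d)) * exp (- (lam * c) * x)"
  by (simp add: algebra_simps flip: exp_add)

lemma lc_pos: "lam * c > 0" using lam0 c0 by simp

lemma tail_nn: "(\<integral>\<^sup>+x. ennreal (lam * exp (bet * d - lam * c * x)) * indicator {t..} x \<partial>lborel)
   = ennreal (exp (bet * d) * exp (- lam * c * t) / c)"
  unfolding gw_dom_eq using tail_int(3)[OF lc_pos, of "lam * exp (bet * d)" t] lam0
  by (simp add: field_simps)

end

lemma nn_to_set:
  fixes f :: "real \<Rightarrow> real"
  assumes fm[measurable]: "f \<in> borel_measurable borel" and A[measurable]: "A \<in> sets borel"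
    and nn: "\<And>x. x \<in> A \<Longrightarrow> 0 \<le> f x"
    and N: "(\<integral>\<^sup>+x. ennreal (f x) * indicator A x \<partial>lborel) = ennreal r" and r0: "0 \<le> r"
  shows "set_integrable lborel A f" "(LINT x:A|lborel. f x) = r"
proof -
  have N2: "(\<integral>\<^sup>+x. ennreal (norm (indicator A x *\<^sub>R f x)) \<partial>lborel) = ennreal r"
    unfolding N[symmetric] by (intro nn_integral_cong) (auto simp: indicator_def nn)
  show si: "set_integrable lborel A f" unfolding set_integrable_def
    by (rule integrableI_bounded) (use N2 in simp_all)
  have N3: "(\<integral>\<^sup>+x. ennreal (indicator A x *\<^sub>R f x) \<partial>lborel) = ennreal r"
    unfolding N[symmetric] by (intro nn_integral_cong) (auto simp: indicator_def nn)
  show "(LINT x:A|lborel. f x) = r" unfolding set_lebesgue_integral_def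
    by (subst integral_eq_nn_integral) (use N3 r0 nn in \<open>auto simp: indicator_def\<close>)
qed

lemma AE_except_point: "(\<And>x. x \<noteq> a \<Longrightarrow> P x) \<Longrightarrow> AE x in lborel. P x"
  using AE_lborel_singleton[of a] by (auto elim!: eventually_mono)

context model
begin

lemma Bf_0[simp]: "Bf lam \<gamma> 0 = 0" unfolding Bf_def by simp

lemma Bf_deriv: "((\<lambda>x. lam * Bf lam \<gamma> x) has_vector_derivative lam * exp ((\<gamma> - lam) * x)) (at x within S)"
proof (cases "\<gamma> = lam")
  case True
  then show ?thesis unfolding Bf_def has_real_derivative_iff_has_vector_derivative[symmetric]
    by (auto intro!: derivative_eq_intros)
next
  case False
  then show ?thesis unfolding Bf_def has_real_derivative_iff_has_vector_derivative[symmetric]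
    by (auto intro!: derivative_eq_intros)
qed

lemma head_hasint: "((\<lambda>x. lam * exp ((\<gamma> - lam) * x)) has_integral lam * Bf lam \<gamma> d) {0..d}"
  using fundamental_theorem_of_calculus[OF d0, of "\<lambda>x. lam * Bf lam \<gamma> x" "\<lambda>x. lam * exp ((\<gamma> - lam) * x)"]
    Bf_deriv by simp

lemma gw_head: "x \<le> d \<Longrightarrow> gw x = lam * exp ((\<gamma> - lam) * x)"
  unfolding gw_eq Is_def by (simp add: algebra_simps)

lemma Bf_nonneg: "0 \<le> Bf lam \<gamma> d"
proof -
  consider "\<gamma> = lam" | "\<gamma> > lam" | "\<gamma> < lam" by linarith
  then show ?thesis
  proof cases
    case 1 then show ?thesis unfolding Bf_def using d0 by simp
  next
    case 2
    then have "exp ((\<gamma> - lam) * d) \<ge> 1" using d0 by simp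
    then show ?thesis unfolding Bf_def using 2 by simp
  next
    case 3
    then have "exp ((\<gamma> - lam) * d) \<le> 1" using d0 by (simp add: mult_nonpos_nonneg)
    then show ?thesis unfolding Bf_def using 3 by (simp add: divide_nonpos_neg)
  qed
qed

lemma gw_total_nn:
  "(\<integral>\<^sup>+x. ennreal (gw x) * indicator {0<..} x \<partial>lborel) = ennreal (lam * Bf lam \<gamma> d + exp ((\<gamma> - lam) * d) / c)"
proof -
  have "(\<integral>\<^sup>+x. ennreal (gw x) * indicator {0<..} x \<partial>lborel)
      = (\<integral>\<^sup>+x. ennreal (gw x) * indicator {0..d} x + ennreal (gw x) * indicator {d<..} x \<partial>lborel)"
    by (intro nn_integral_cong_AE AE_except_point[of 0]) (use d0 in \<open>auto split: split_indicator\<close>)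
  also have "\<dots> = (\<integral>\<^sup>+x. ennreal (gw x) * indicator {0..d} x \<partial>lborel) + (\<integral>\<^sup>+x. ennreal (gw x) * indicator {d<..} x \<partial>lborel)"
    by (intro nn_integral_add) auto
  also have "(\<integral>\<^sup>+x. ennreal (gw x) * indicator {0..d} x \<partial>lborel)
      = (\<integral>\<^sup>+x. ennreal (lam * exp ((\<gamma> - lam) * x)) * indicator {0..d} x \<partial>lborel)"
    by (intro nn_integral_cong) (auto simp: gw_head split: split_indicator)
  also have "\<dots> = ennreal (lam * Bf lam \<gamma> d)"
    using nn_integral_has_integral_lebesgue'[OF _ head_hasint] lam0 by simp
  also have "(\<integral>\<^sup>+x. ennreal (gw x) * indicator {d<..} x \<partial>lborel)
      = (\<integral>\<^sup>+x. ennreal (lam * exp (bet * d - lam * c * x)) * indicator {d..} x \<partial>lborel)"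
    by (intro nn_integral_cong_AE AE_except_point[of d]) (auto simp: gw_tail split: split_indicator)
  also have "\<dots> = ennreal (exp (bet * d) * exp (- lam * c * d) / c)" by (rule tail_nn)
  also have "exp (bet * d) * exp (- lam * c * d) = exp ((\<gamma> - lam) * d)"
    unfolding bet_def by (simp add: algebra_simps flip: exp_add)
  finally show ?thesis using lam0 c0 Bf_nonneg by (simp add: ennreal_plus[symmetric] del: ennreal_plus)
qed

lemma gw_int: "set_integrable lborel {0<..} gw"
  and gw_LINT: "(LINT x:{0<..}|lborel. gw x) = lam * Bf lam \<gamma> d + exp ((\<gamma> - lam) * d) / c"
  using nn_to_set[OF gw_meas _ _ gw_total_nn] gw_pos lam0 c0 Bf_nonneg
  by (auto simp: less_imp_le add_nonneg_nonneg)

definition "Estar = ExpX q lam rho"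

lemma Estar_eq: "Estar = Ecl q lam \<gamma> c d"
  unfolding Estar_def ExpX_def Ecl_def gw_def[symmetric] gw_LINT by (simp add: algebra_simps)

lemma Estar_pos: "Estar > 0"
proof -
  have "0 \<le> 1 - q" using q1 by simp
  moreover have "0 < q * (lam * Bf lam \<gamma> d + exp ((\<gamma> - lam) * d) / c)"
    using q0 lam0 c0 Bf_nonneg by (intro mult_pos_pos add_nonneg_pos) auto
  ultimately show ?thesis unfolding Estar_eq Ecl_def by (simp add: algebra_simps)
qed

lemma foc': "Estar * (1 + \<theta>) * q powr c = q * exp (bet * d) / c"
proof -
  have "c * (1 + \<theta>) * Estar = q powr (1 - c) * exp (bet * d)"
    using foc unfolding FOC_def Estar_eq bet_def .
  then have "c * (1 + \<theta>) * Estar * q powr c = q powr (1 - c) * q powr c * exp (bet * d)" by simp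
  also have "q powr (1 - c) * q powr c = q" using q0 by (simp flip: powr_add)
  finally show ?thesis using c0 by (simp add: field_simps)
qed

end

definition goodJ :: "(real \<Rightarrow> real) \<Rightarrow> bool" where
  "goodJ J \<longleftrightarrow> continuous_on UNIV J \<and> (\<forall>x\<ge>0. 0 \<le> J x \<and> J x \<le> x) \<and> (\<forall>x y. 0 \<le> y \<and> y \<le> x \<longrightarrow> J y \<le> J x)"

definition Uset :: "(real \<Rightarrow> real) \<Rightarrow> real \<Rightarrow> real set" where
  "Uset J s = {x. 0 < x \<and> s < J x}"

lemma goodJ_meas: "goodJ J \<Longrightarrow> J \<in> borel_measurable borel"
  unfolding goodJ_def by (intro borel_measurable_continuous_onI) auto

lemma goodJ_0: "goodJ J \<Longrightarrow> J 0 = 0"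
  unfolding goodJ_def by (metis order.refl order_antisym)

lemma Uset_meas: "goodJ J \<Longrightarrow> Uset J s \<in> sets borel"
proof -
  assume "goodJ J"
  then have [measurable]: "J \<in> borel_measurable borel" by (rule goodJ_meas)
  show ?thesis unfolding Uset_def by measurable
qed

lemma Uset_shape:
  assumes g: "goodJ J" and s: "0 \<le> s" and ne: "Uset J s \<noteq> {}"
  shows "s \<le> Inf (Uset J s)" "Uset J s \<subseteq> {Inf (Uset J s)..}" "{Inf (Uset J s)<..} \<subseteq> Uset J s"
proof -
  let ?U = "Uset J s"
  have bdd: "bdd_below ?U" unfolding Uset_def by (rule bdd_belowI[of _ 0]) auto
  have xs: "x > s" if "x \<in> ?U" for x
  proof -
    have "0 < x" "s < J x" using that unfolding Uset_def by auto
    moreover have "J x \<le> x" using g \<open>0 < x\<close> unfolding goodJ_def by auto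
    ultimately show ?thesis by simp
  qed
  show "s \<le> Inf ?U" using ne xs by (intro cInf_greatest) (auto intro: less_imp_le)
  show "?U \<subseteq> {Inf ?U..}" using bdd by (auto intro: cInf_lower)
  show "{Inf ?U<..} \<subseteq> ?U"
  proof
    fix x assume "x \<in> {Inf ?U<..}"
    then have "Inf ?U < x" by simp
    then obtain y where y: "y \<in> ?U" "y < x" using cInf_less_iff[OF ne bdd] by auto
    then have "0 < y" "s < J y" unfolding Uset_def by auto
    moreover have "J y \<le> J x" using g y \<open>0 < y\<close> unfolding goodJ_def by auto
    ultimately show "x \<in> ?U" unfolding Uset_def using y by auto
  qed
qed

lemma mem_between:
  assumes "{t<..} \<subseteq> U" "U \<subseteq> {t..}" "x \<noteq> (t::real)"
  shows "x \<in> U \<longleftrightarrow> t \<le> x"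
proof
  assume "x \<in> U" then show "t \<le> x" using assms(2) by auto
next
  assume "t \<le> x" then have "t < x" using assms(3) by simp
  then show "x \<in> U" using assms(1) by auto
qed

lemma indicator_between:
  assumes "{t<..} \<subseteq> U" "U \<subseteq> {t..}" "x \<noteq> (t::real)"
  shows "indicator U x = (indicator {t..} x :: 'a :: zero_neq_one)"
proof -
  have "x \<in> U \<longleftrightarrow> x \<in> {t..}" using mem_between[OF assms] by simp
  then show ?thesis by (simp add: indicator_def)
qed

lemma survI_formula:
  assumes g: "goodJ J" and s: "0 \<le> s"
  shows "survI q lam J s = q * (LINT x:Uset J s|lborel. lam * exp (- lam * x))"
proof -
  have "(LINT x:{0<..}|lborel. lam * exp (- lam * x) * of_bool (s < J x)) = (LINT x:Uset J s|lborel. lam * exp (- lam * x))"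
    unfolding set_lebesgue_integral_def Uset_def
    by (intro Bochner_Integration.integral_cong) (auto split: split_indicator)
  then show ?thesis unfolding survI_def ExpX_def using goodJ_0[OF g] s by simp
qed

lemma survI_empty:
  assumes g: "goodJ J" and s: "0 \<le> s" and e: "Uset J s = {}"
  shows "survI q lam J s = 0"
  unfolding survI_formula[OF g s] e by (simp add: set_lebesgue_integral_def)

lemma survI_nonempty:
  assumes g: "goodJ J" and s: "0 \<le> s" and ne: "Uset J s \<noteq> {}" and lam0: "0 < lam"
  shows "survI q lam J s = q * exp (- lam * Inf (Uset J s))"
proof -
  let ?U = "Uset J s" let ?t = "Inf ?U"
  note sh = Uset_shape[OF g s ne]
  have [measurable]: "?U \<in> sets borel" by (rule Uset_meas[OF g])
  have "(LINT x:?U|lborel. lam * exp (- lam * x)) = (LINT x:{?t..}|lborel. lam * exp (- lam * x))"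
  proof (rule set_integral_cong_set)
    show "AE x in lborel. (x \<in> {?t..}) = (x \<in> ?U)"
      using mem_between[OF sh(3) sh(2)] by (intro AE_except_point[of ?t]) simp
  qed (auto simp: set_borel_measurable_def)
  also have "\<dots> = exp (- lam * ?t)"
    using tail_int(2)[OF lam0, of lam ?t] lam0 by simp
  finally show ?thesis unfolding survI_formula[OF g s] by simp
qed

lemma layer_cake:
  fixes g J :: "real \<Rightarrow> real"
  assumes gm[measurable]: "g \<in> borel_measurable borel" and Jm[measurable]: "J \<in> borel_measurable borel"
    and g0: "\<And>x. 0 \<le> g x" and J0: "\<And>x. 0 < x \<Longrightarrow> 0 \<le> J x"
  shows "(\<integral>\<^sup>+x. ennreal (g x * J x) * indicator {0<..} x \<partial>lborel)
       = (\<integral>\<^sup>+s. (\<integral>\<^sup>+x. ennreal (g x) * indicator {x. 0 < x \<and> s < J x} x \<partial>lborel) * indicator {0..} s \<partial>lborel)"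
proof -
  have "(\<integral>\<^sup>+x. ennreal (g x * J x) * indicator {0<..} x \<partial>lborel)
      = (\<integral>\<^sup>+x. (\<integral>\<^sup>+s. ennreal (g x) * indicator {0<..} x * indicator {0..<J x} s \<partial>lborel) \<partial>lborel)"
  proof (intro nn_integral_cong)
    fix x :: real
    show "ennreal (g x * J x) * indicator {0<..} x = (\<integral>\<^sup>+s. ennreal (g x) * indicator {0<..} x * indicator {0..<J x} s \<partial>lborel)"
    proof (cases "0 < x")
      case True
      have "(\<integral>\<^sup>+s. ennreal (g x) * indicator {0<..} x * indicator {0..<J x} s \<partial>lborel)
          = ennreal (g x) * indicator {0<..} x * (\<integral>\<^sup>+s. indicator {0..<J x} s \<partial>lborel)"
        by (subst nn_integral_cmult) auto
      also have "(\<integral>\<^sup>+s. indicator {0..<J x} s \<partial>lborel) = ennreal (J x)"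
        using J0[OF True] by simp
      finally show ?thesis using True g0 J0[OF True] by (simp add: ennreal_mult)
    qed simp
  qed
  also have "\<dots> = (\<integral>\<^sup>+s. (\<integral>\<^sup>+x. ennreal (g x) * indicator {0<..} x * indicator {0..<J x} s \<partial>lborel) \<partial>lborel)"
  proof (rule lborel_pair.Fubini'[symmetric])
    have "(\<lambda>(x, s). ennreal (g x) * indicator {0<..} x * indicator {0..<J x} s)
        = (\<lambda>p. ennreal (g (fst p)) * indicator {0<..} (fst p) * indicator {p. 0 \<le> snd p \<and> snd p < J (fst p)} p)"
      by (auto simp: fun_eq_iff split: split_indicator)
    also have "\<dots> \<in> borel_measurable (lborel \<Otimes>\<^sub>M lborel)" by measurable
    finally show "(\<lambda>(x, s). ennreal (g x) * indicator {0<..} x * indicator {0..<J x} s) \<in> borel_measurable (lborel \<Otimes>\<^sub>M lborel)" .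
  qed
  also have "\<dots> = (\<integral>\<^sup>+s. (\<integral>\<^sup>+x. ennreal (g x) * indicator {x. 0 < x \<and> s < J x} x \<partial>lborel) * indicator {0..} s \<partial>lborel)"
  proof (intro nn_integral_cong)
    fix s :: real
    have "(\<integral>\<^sup>+x. ennreal (g x) * indicator {0<..} x * indicator {0..<J x} s \<partial>lborel)
        = (\<integral>\<^sup>+x. ennreal (g x) * indicator {x. 0 < x \<and> s < J x} x * indicator {0..} s \<partial>lborel)"
      by (intro nn_integral_cong) (auto split: split_indicator)
    also have "\<dots> = (\<integral>\<^sup>+x. ennreal (g x) * indicator {x. 0 < x \<and> s < J x} x \<partial>lborel) * indicator {0..} s"
      by (rule nn_integral_multc) measurable
    finally show "(\<integral>\<^sup>+x. ennreal (g x) * indicator {0<..} x * indicator {0..<J x} s \<partial>lborel)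
        = (\<integral>\<^sup>+x. ennreal (g x) * indicator {x. 0 < x \<and> s < J x} x \<partial>lborel) * indicator {0..} s" .
  qed
  finally show ?thesis .
qed

lemma ktilde_0[simp]: "ktilde \<theta> c 0 = 0" unfolding ktilde_def by simp

context model
begin

lemma pw_price:
  assumes g: "goodJ J" and s: "0 \<le> s"
  shows "ennreal q * (\<integral>\<^sup>+x. ennreal (gw x) * indicator (Uset J s) x \<partial>lborel) \<le> ennreal (Estar * ktilde \<theta> c (survI q lam J s))"
    and "(\<forall>x\<in>Uset J s. d \<le> x) \<Longrightarrow> ennreal q * (\<integral>\<^sup>+x. ennreal (gw x) * indicator (Uset J s) x \<partial>lborel) = ennreal (Estar * ktilde \<theta> c (survI q lam J s))"
    and "0 \<le> survI q lam J s" "survI q lam J s \<le> q * exp (- lam * s)"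
proof -
  let ?U = "Uset J s"
  have "(ennreal q * (\<integral>\<^sup>+x. ennreal (gw x) * indicator ?U x \<partial>lborel) \<le> ennreal (Estar * ktilde \<theta> c (survI q lam J s)))
    \<and> ((\<forall>x\<in>?U. d \<le> x) \<longrightarrow> ennreal q * (\<integral>\<^sup>+x. ennreal (gw x) * indicator ?U x \<partial>lborel) = ennreal (Estar * ktilde \<theta> c (survI q lam J s)))
    \<and> 0 \<le> survI q lam J s \<and> survI q lam J s \<le> q * exp (- lam * s)"
  proof (cases "?U = {}")
    case True
    then show ?thesis using survI_empty[OF g s True] q0 by simp
  next
    case False
    let ?t = "Inf ?U"
    note sh = Uset_shape[OF g s False]
    have S: "survI q lam J s = q * exp (- lam * ?t)" by (rule survI_nonempty[OF g s False lam0])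
    have I1: "(\<integral>\<^sup>+x. ennreal (gw x) * indicator ?U x \<partial>lborel) = (\<integral>\<^sup>+x. ennreal (gw x) * indicator {?t..} x \<partial>lborel)"
      by (intro nn_integral_cong_AE AE_except_point[of ?t]) (simp add: indicator_between[OF sh(3) sh(2)])
    have I2: "(\<integral>\<^sup>+x. ennreal (gw x) * indicator {?t..} x \<partial>lborel) \<le> (\<integral>\<^sup>+x. ennreal (lam * exp (bet * d - lam * c * x)) * indicator {?t..} x \<partial>lborel)"
      by (intro nn_integral_mono) (auto intro!: ennreal_leI gw_bound split: split_indicator)
    have I3: "?t \<ge> d \<Longrightarrow> (\<integral>\<^sup>+x. ennreal (gw x) * indicator {?t..} x \<partial>lborel) = (\<integral>\<^sup>+x. ennreal (lam * exp (bet * d - lam * c * x)) * indicator {?t..} x \<partial>lborel)"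
      by (intro nn_integral_cong) (auto simp: gw_tail split: split_indicator)
    have K: "Estar * ktilde \<theta> c (survI q lam J s) = q * (exp (bet * d) * exp (- lam * c * ?t) / c)"
    proof -
      have "ktilde \<theta> c (survI q lam J s) = (1 + \<theta>) * q powr c * exp (- lam * c * ?t)"
        unfolding S ktilde_def using q0 by (simp add: powr_mult exp_powr_real algebra_simps)
      then have "Estar * ktilde \<theta> c (survI q lam J s) = (Estar * (1 + \<theta>) * q powr c) * exp (- lam * c * ?t)"
        by simp
      also have "\<dots> = q * (exp (bet * d) * exp (- lam * c * ?t) / c)" unfolding foc' by simp
      finally show ?thesis .
    qed
    have E: "ennreal q * ennreal (exp (bet * d) * exp (- lam * c * ?t) / c) = ennreal (q * (exp (bet * d) * exp (- lam * c * ?t) / c))"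
      by (rule ennreal_mult[symmetric]) (use q0 c0 in auto)
    have A: "ennreal q * (\<integral>\<^sup>+x. ennreal (gw x) * indicator ?U x \<partial>lborel) \<le> ennreal (Estar * ktilde \<theta> c (survI q lam J s))"
      unfolding I1 K E[symmetric] tail_nn[symmetric] using I2 by (intro mult_left_mono) auto
    have B: "ennreal q * (\<integral>\<^sup>+x. ennreal (gw x) * indicator ?U x \<partial>lborel) = ennreal (Estar * ktilde \<theta> c (survI q lam J s))"
      if "\<forall>x\<in>?U. d \<le> x"
    proof -
      have "?t \<ge> d" using that False by (intro cInf_greatest) auto
      then show ?thesis unfolding I1 K E[symmetric] tail_nn[symmetric] I3[OF \<open>?t \<ge> d\<close>] by simp
    qed
    have "exp (- lam * ?t) \<le> exp (- lam * s)" using sh(1) lam0 by simp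
    then have "survI q lam J s \<le> q * exp (- lam * s)" unfolding S using q0 by simp
    moreover have "0 \<le> survI q lam J s" unfolding S using q0 by simp
    ultimately show ?thesis using A B by blast
  qed
  then show "ennreal q * (\<integral>\<^sup>+x. ennreal (gw x) * indicator (Uset J s) x \<partial>lborel) \<le> ennreal (Estar * ktilde \<theta> c (survI q lam J s))"
    and "(\<forall>x\<in>Uset J s. d \<le> x) \<Longrightarrow> ennreal q * (\<integral>\<^sup>+x. ennreal (gw x) * indicator (Uset J s) x \<partial>lborel) = ennreal (Estar * ktilde \<theta> c (survI q lam J s))"
    and "0 \<le> survI q lam J s" "survI q lam J s \<le> q * exp (- lam * s)" by auto
qed

end

lemma set_LINT_nn:
  fixes f :: "real \<Rightarrow> real"
  assumes [measurable]: "f \<in> borel_measurable borel" "A \<in> sets borel" and nn: "\<And>x. x \<in> A \<Longrightarrow> 0 \<le> f x"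
  shows "(LINT x:A|lborel. f x) = enn2real (\<integral>\<^sup>+x. ennreal (f x) * indicator A x \<partial>lborel)"
proof -
  have "(\<integral>\<^sup>+x. ennreal (indicator A x *\<^sub>R f x) \<partial>lborel) = (\<integral>\<^sup>+x. ennreal (f x) * indicator A x \<partial>lborel)"
    by (intro nn_integral_cong) (auto split: split_indicator)
  then show ?thesis unfolding set_lebesgue_integral_def
    by (subst integral_eq_nn_integral) (use nn in \<open>auto split: split_indicator\<close>)
qed

lemma survI_meas: "goodJ J \<Longrightarrow> (\<lambda>s. survI q lam J s) \<in> borel_measurable borel"
proof -
  assume "goodJ J"
  then have [measurable]: "J \<in> borel_measurable borel" by (rule goodJ_meas)
  show ?thesis unfolding survI_def ExpX_def set_lebesgue_integral_def by measurable
qed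

context model
begin

lemma pricing:
  assumes g: "goodJ J"
  shows "q * (LINT x:{0<..}|lborel. lam * exp (- lam * x) * (rho x * J x)) \<le> Estar * premium (ktilde \<theta> c) q lam J"
    and "(\<forall>s\<ge>0. \<forall>x\<in>Uset J s. d \<le> x) \<Longrightarrow> q * (LINT x:{0<..}|lborel. lam * exp (- lam * x) * (rho x * J x)) = Estar * premium (ktilde \<theta> c) q lam J"
proof -
  have [measurable]: "J \<in> borel_measurable borel" by (rule goodJ_meas[OF g])
  have [measurable]: "(\<lambda>s. survI q lam J s) \<in> borel_measurable borel" by (rule survI_meas[OF g])
  have J0: "\<And>x. 0 < x \<Longrightarrow> 0 \<le> J x" using g unfolding goodJ_def by auto
  define k where "k s = ktilde \<theta> c (survI q lam J s)" for s
  have km[measurable]: "k \<in> borel_measurable borel" unfolding k_def ktilde_def by measurable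
  have k0: "0 \<le> k s" for s unfolding k_def ktilde_def using th0 by simp
  define N1 where "N1 = (\<integral>\<^sup>+s. ennreal (k s) * indicator {0..} s \<partial>lborel)"
  define N2 where "N2 = (\<integral>\<^sup>+x. ennreal (gw x * J x) * indicator {0<..} x \<partial>lborel)"
  have P: "premium (ktilde \<theta> c) q lam J = enn2real N1"
    unfolding premium_def N1_def k_def[symmetric] by (rule set_LINT_nn) (auto simp: k0)
  have L: "(LINT x:{0<..}|lborel. lam * exp (- lam * x) * (rho x * J x)) = enn2real N2"
  proof -
    have "(LINT x:{0<..}|lborel. lam * exp (- lam * x) * (rho x * J x)) = (LINT x:{0<..}|lborel. gw x * J x)"
      unfolding gw_def by (simp add: mult.assoc)
    also have "\<dots> = enn2real N2" unfolding N2_def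
      by (rule set_LINT_nn) (auto intro!: mult_nonneg_nonneg less_imp_le[OF gw_pos] J0)
    finally show ?thesis .
  qed
  have kb: "k s \<le> (1 + \<theta>) * q powr c * exp (- (lam * c * s))" if "0 \<le> s" for s
  proof -
    have "survI q lam J s powr c \<le> (q * exp (- lam * s)) powr c"
      using pw_price(3,4)[OF g that] c0 by (intro powr_mono2) auto
    also have "\<dots> = q powr c * exp (- (lam * c * s))" using q0 by (simp add: powr_mult exp_powr_real algebra_simps)
    finally show ?thesis unfolding k_def ktilde_def using th0 by (simp add: mult.assoc)
  qed
  have N1fin: "N1 < \<infinity>"
  proof -
    have "N1 \<le> (\<integral>\<^sup>+s. ennreal ((1 + \<theta>) * q powr c * exp (- (lam * c) * s)) * indicator {0..} s \<partial>lborel)"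
      unfolding N1_def by (intro nn_integral_mono) (auto intro!: ennreal_leI kb split: split_indicator)
    also have "\<dots> = ennreal ((1 + \<theta>) * q powr c * exp (- (lam * c) * 0) / (lam * c))"
      by (rule tail_int(3)[OF lc_pos]) (use th0 in auto)
    finally show ?thesis by (simp add: top.not_eq_extremum order_le_less_trans)
  qed
  have N2eq: "N2 = (\<integral>\<^sup>+s. (\<integral>\<^sup>+x. ennreal (gw x) * indicator (Uset J s) x \<partial>lborel) * indicator {0..} s \<partial>lborel)"
    unfolding N2_def Uset_def by (rule layer_cake) (auto intro: less_imp_le[OF gw_pos] J0)
  have qN2: "ennreal q * N2 = (\<integral>\<^sup>+s. ennreal q * (\<integral>\<^sup>+x. ennreal (gw x) * indicator (Uset J s) x \<partial>lborel) * indicator {0..} s \<partial>lborel)"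
    unfolding N2eq by (subst nn_integral_cmult[symmetric]) (auto simp: mult.assoc Uset_def intro!: nn_integral_cong)
  have EN1: "ennreal Estar * N1 = (\<integral>\<^sup>+s. ennreal (Estar * k s) * indicator {0..} s \<partial>lborel)"
    unfolding N1_def using Estar_pos
    by (subst nn_integral_cmult[symmetric]) (auto simp: ennreal_mult'[OF less_imp_le[OF Estar_pos]] mult.assoc intro!: nn_integral_cong)
  have le: "ennreal q * N2 \<le> ennreal Estar * N1"
    unfolding qN2 EN1 k_def by (intro nn_integral_mono) (auto intro!: pw_price(1)[OF g] split: split_indicator)
  have fin: "ennreal Estar * N1 < top" using N1fin by (simp add: ennreal_mult_less_top)
  show "q * (LINT x:{0<..}|lborel. lam * exp (- lam * x) * (rho x * J x)) \<le> Estar * premium (ktilde \<theta> c) q lam J"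
  proof -
    have "q * enn2real N2 = enn2real (ennreal q * N2)" using q0 by (simp add: enn2real_mult)
    also have "\<dots> \<le> enn2real (ennreal Estar * N1)" by (rule enn2real_mono[OF le fin])
    also have "\<dots> = Estar * enn2real N1" using Estar_pos by (simp add: enn2real_mult)
    finally show ?thesis unfolding L P .
  qed
  assume h: "\<forall>s\<ge>0. \<forall>x\<in>Uset J s. d \<le> x"
  have eq: "ennreal q * N2 = ennreal Estar * N1"
    unfolding qN2 EN1 k_def using h by (intro nn_integral_cong) (auto intro!: pw_price(2)[OF g] split: split_indicator)
  have "q * enn2real N2 = enn2real (ennreal q * N2)" using q0 by (simp add: enn2real_mult)
  also have "\<dots> = Estar * enn2real N1" unfolding eq using Estar_pos by (simp add: enn2real_mult)
  finally show "q * (LINT x:{0<..}|lborel. lam * exp (- lam * x) * (rho x * J x)) = Estar * premium (ktilde \<theta> c) q lam J"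
    unfolding L P .
qed

end

lemma exp_strict: "z \<noteq> 0 \<Longrightarrow> 1 + z < exp (z::real)"
proof (cases "1 + z / 2 \<ge> 0")
  case True
  assume z: "z \<noteq> 0"
  have "1 + z / 2 \<le> exp (z / 2)" by (rule exp_ge_add_one_self)
  then have "(1 + z / 2) * (1 + z / 2) \<le> exp (z / 2) * exp (z / 2)"
    using True by (intro mult_mono) auto
  also have "exp (z / 2) * exp (z / 2) = exp z" by (simp flip: exp_add)
  finally have "1 + z + z * z / 4 \<le> exp z" by (simp add: algebra_simps)
  moreover have "z * z > 0" using z by (cases "z > 0") (auto simp: mult_neg_neg)
  ultimately show ?thesis by simp
next
  case False
  then have "1 + z < 0" by simp
  then show ?thesis using exp_gt_zero[of z] by linarith
qed

lemma xexp_bound: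
  fixes r x :: real
  assumes "r > 0" "x \<ge> 0"
  shows "x * exp (- r * x) \<le> (2 / r) * exp (- (r / 2) * x)"
proof -
  have "r * x / 2 \<le> exp (r * x / 2)" using exp_ge_add_one_self[of "r * x / 2"] by linarith
  then have "x \<le> (2 / r) * exp (r * x / 2)" using assms by (simp add: field_simps)
  then have "x * exp (- (r / 2) * x) \<le> (2 / r) * exp (r * x / 2) * exp (- (r / 2) * x)"
    by (intro mult_right_mono) auto
  also have "\<dots> = 2 / r" by (simp add: mult.assoc flip: exp_add)
  finally have "x * exp (- (r / 2) * x) \<le> 2 / r" by simp
  then have "x * exp (- (r / 2) * x) * exp (- (r / 2) * x) \<le> (2 / r) * exp (- (r / 2) * x)"
    by (intro mult_right_mono) auto
  also have "x * exp (- (r / 2) * x) * exp (- (r / 2) * x) = x * exp (- r * x)"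
    by (simp add: mult.assoc flip: exp_add)
  finally show ?thesis .
qed

context model
begin

lemma gwx_int: "set_integrable lborel {0<..} (\<lambda>x. gw x * x)"
proof -
  let ?K = "lam * exp (bet * d) * (2 / (lam * c))"
  have "set_integrable lborel {0..} (\<lambda>x. ?K * exp (- (lam * c / 2) * x))"
    using tail_int(1)[of "lam * c / 2" ?K 0] lc_pos lam0 c0 by simp
  then have i: "set_integrable lborel {0<..} (\<lambda>x. ?K * exp (- (lam * c / 2) * x))"
    by (rule set_integrable_subset) auto
  show ?thesis
  proof (rule set_integrable_bound[OF i])
    show "set_borel_measurable lborel {0<..} (\<lambda>x. gw x * x)"
      unfolding set_borel_measurable_def by measurable
    show "AE x in lborel. x \<in> {0<..} \<longrightarrow> norm (gw x * x) \<le> norm (?K * exp (- (lam * c / 2) * x))"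
    proof (intro AE_I2 impI)
      fix x :: real assume "x \<in> {0<..}"
      then have x: "x > 0" by simp
      have "gw x * x \<le> lam * exp (bet * d - lam * c * x) * x"
        using gw_bound x by (intro mult_right_mono) auto
      also have "\<dots> = lam * exp (bet * d) * (x * exp (- (lam * c) * x))"
        by (simp add: algebra_simps flip: exp_add)
      also have "\<dots> \<le> lam * exp (bet * d) * ((2 / (lam * c)) * exp (- (lam * c / 2) * x))"
        using xexp_bound[OF lc_pos, of x] x lam0 by (intro mult_left_mono) auto
      finally show "norm (gw x * x) \<le> norm (?K * exp (- (lam * c / 2) * x))"
        using x gw_pos[of x] lam0 c0 by simp
    qed
  qed
qed

lemma gwJ_int:
  assumes Jm: "J \<in> borel_measurable borel" and J: "\<And>x. 0 < x \<Longrightarrow> 0 \<le> J x \<and> J x \<le> x"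
  shows "set_integrable lborel {0<..} (\<lambda>x. lam * exp (- lam * x) * (rho x * J x))"
proof (rule set_integrable_bound[OF gwx_int])
  show "set_borel_measurable lborel {0<..} (\<lambda>x. lam * exp (- lam * x) * (rho x * J x))"
    unfolding set_borel_measurable_def using Jm by measurable
  show "AE x in lborel. x \<in> {0<..} \<longrightarrow> norm (lam * exp (- lam * x) * (rho x * J x)) \<le> norm (gw x * x)"
  proof (intro AE_I2 impI)
    fix x :: real assume "x \<in> {0<..}"
    then have x: "x > 0" by simp
    have e: "lam * exp (- lam * x) * (rho x * J x) = gw x * J x" unfolding gw_def by simp
    have "gw x * J x \<le> gw x * x" using J[OF x] gw_pos[of x] by (intro mult_left_mono) auto
    moreover have "0 \<le> gw x * J x" using J[OF x] gw_pos[of x] by simp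
    ultimately show "norm (lam * exp (- lam * x) * (rho x * J x)) \<le> norm (gw x * x)"
      unfolding e by simp
  qed
qed

lemma goodJ_Is: "goodJ Is"
proof -
  have "Is y \<le> Is x" if "y \<le> x" for x y
  proof -
    have "max (y - d) 0 \<le> max (x - d) 0" using that by simp
    then show ?thesis unfolding Is_def using aa_pos by (intro mult_left_mono) auto
  qed
  then show ?thesis unfolding goodJ_def using Is_cont Is_nonneg Is_le by auto
qed

end

context model
begin

lemma Uset_Is: "0 \<le> s \<Longrightarrow> x \<in> Uset Is s \<Longrightarrow> d \<le> x"
proof -
  assume s: "0 \<le> s" and x: "x \<in> Uset Is s"
  then have "s < aa * max (x - d) 0" unfolding Uset_def Is_def by auto
  then have "0 < aa * max (x - d) 0" using s by linarith
  then have "0 < max (x - d) 0" using aa_pos by (simp add: zero_less_mult_iff)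
  then show "d \<le> x" by simp
qed

lemma main_ineq:
  assumes g: "goodJ J"
    and intJ: "set_integrable lborel {0<..} (\<lambda>x. lam * exp (- lam * x) * exp (\<gamma> * (x - J x)))"
  shows "exp (\<gamma> * premium (ktilde \<theta> c) q lam Is) * Estar
           \<le> exp (\<gamma> * premium (ktilde \<theta> c) q lam J) * ExpX q lam (\<lambda>x. exp (\<gamma> * (x - J x)))"
    and "exp (\<gamma> * premium (ktilde \<theta> c) q lam J) * ExpX q lam (\<lambda>x. exp (\<gamma> * (x - J x)))
           \<le> exp (\<gamma> * premium (ktilde \<theta> c) q lam Is) * Estar
         \<Longrightarrow> AE x in lborel. 0 < x \<longrightarrow> J x = Is x"
proof -
  have Jm[measurable]: "J \<in> borel_measurable borel" by (rule goodJ_meas[OF g])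
  have J0: "J 0 = 0" by (rule goodJ_0[OF g])
  have Jb: "\<And>x. 0 < x \<Longrightarrow> 0 \<le> J x \<and> J x \<le> x" using g unfolding goodJ_def by auto
  define w where "w x = lam * exp (- lam * x)" for x
  define A0 where "A0 = (LINT x:{0<..}|lborel. w x * rho x)"
  define A1 where "A1 = (LINT x:{0<..}|lborel. w x * (rho x * Is x))"
  define A2 where "A2 = (LINT x:{0<..}|lborel. w x * (rho x * J x))"
  define B where "B = (LINT x:{0<..}|lborel. w x * exp (\<gamma> * (x - J x)))"
  define p1 where "p1 = premium (ktilde \<theta> c) q lam Is"
  define p2 where "p2 = premium (ktilde \<theta> c) q lam J"
  define EJ where "EJ = ExpX q lam (\<lambda>x. exp (\<gamma> * (x - J x)))"
  have i0: "set_integrable lborel {0<..} (\<lambda>x. w x * rho x)"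
    using gw_int unfolding gw_def w_def .
  have i1: "set_integrable lborel {0<..} (\<lambda>x. w x * (rho x * Is x))"
    unfolding w_def by (rule gwJ_int) (auto simp: Is_nonneg Is_le)
  have i2: "set_integrable lborel {0<..} (\<lambda>x. w x * (rho x * J x))"
    unfolding w_def by (rule gwJ_int[OF Jm Jb])
  have iB: "set_integrable lborel {0<..} (\<lambda>x. w x * exp (\<gamma> * (x - J x)))"
    using intJ unfolding w_def .
  have pr1: "q * A2 \<le> Estar * p2" unfolding A2_def p2_def w_def by (rule pricing(1)[OF g])
  have pr2: "q * A1 = Estar * p1" unfolding A1_def p1_def w_def
    by (rule pricing(2)[OF goodJ_Is]) (auto intro: Uset_Is)
  have ES: "Estar = 1 - q + q * A0" unfolding Estar_def ExpX_def A0_def w_def by simp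
  have EJ: "EJ = 1 - q + q * B" unfolding EJ_def ExpX_def B_def w_def J0 by simp
  have Ep: "Estar > 0" by (rule Estar_pos)
  define m where "m = \<gamma> * q * (A1 - A2) / Estar"
  have mE: "m * Estar = \<gamma> * q * (A1 - A2)" unfolding m_def using Ep by simp
  define c1 where "c1 = exp m * (1 - m)"
  define c2 where "c2 = exp m * \<gamma>"
  define f where "f x = c1 * (w x * rho x) + c2 * (w x * (rho x * Is x)) - c2 * (w x * (rho x * J x))" for x
  have iF: "set_integrable lborel {0<..} f" unfolding f_def using i0 i1 i2 by auto
  have LF: "(LINT x:{0<..}|lborel. f x) = c1 * A0 + c2 * A1 - c2 * A2"
  proof -
    have j0: "set_integrable lborel {0<..} (\<lambda>x. c1 * (w x * rho x))" using i0 by auto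
    have j1: "set_integrable lborel {0<..} (\<lambda>x. c2 * (w x * (rho x * Is x)))" using i1 by auto
    have j2: "set_integrable lborel {0<..} (\<lambda>x. c2 * (w x * (rho x * J x)))" using i2 by auto
    have j01: "set_integrable lborel {0<..} (\<lambda>x. c1 * (w x * rho x) + c2 * (w x * (rho x * Is x)))"
      by (rule set_integral_add(1)[OF j0 j1])
    have "(LINT x:{0<..}|lborel. f x) = (LINT x:{0<..}|lborel. c1 * (w x * rho x) + c2 * (w x * (rho x * Is x)))
        - (LINT x:{0<..}|lborel. c2 * (w x * (rho x * J x)))"
      unfolding f_def by (rule set_integral_diff(2)[OF j01 j2])
    also have "(LINT x:{0<..}|lborel. c1 * (w x * rho x) + c2 * (w x * (rho x * Is x)))
        = (LINT x:{0<..}|lborel. c1 * (w x * rho x)) + (LINT x:{0<..}|lborel. c2 * (w x * (rho x * Is x)))"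
      by (rule set_integral_add(2)[OF j0 j1])
    finally show ?thesis unfolding A0_def A1_def A2_def by simp
  qed
  have c1le: "c1 \<le> 1"
  proof -
    have "1 - m \<le> exp (- m)" using exp_ge_add_one_self[of "- m"] by simp
    then have "exp m * (1 - m) \<le> exp m * exp (- m)" by (intro mult_left_mono) auto
    then show ?thesis unfolding c1_def by (simp flip: exp_add)
  qed
  have tang: "f x \<le> w x * exp (\<gamma> * (x - J x))" for x
  proof -
    define Y where "Y = \<gamma> * (Is x - J x)"
    have "1 + (Y - m) \<le> exp (Y - m)" by (rule exp_ge_add_one_self)
    then have "exp m * (1 + (Y - m)) \<le> exp m * exp (Y - m)" by (intro mult_left_mono) auto
    also have "exp m * exp (Y - m) = exp Y" by (simp flip: exp_add)
    finally have t: "exp m * (1 + (Y - m)) \<le> exp Y" .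
    have wr: "0 \<le> w x * rho x" unfolding w_def using lam0 rho_pos[of x] by simp
    have "f x = (w x * rho x) * (exp m * (1 + (Y - m)))"
      unfolding f_def c1_def c2_def Y_def by (simp add: algebra_simps)
    also have "\<dots> \<le> (w x * rho x) * exp Y" using t wr by (intro mult_left_mono) auto
    also have "\<dots> = w x * exp (\<gamma> * (x - J x))"
      unfolding rho_def Y_def by (simp add: mult.assoc algebra_simps flip: exp_add)
    finally show ?thesis .
  qed
  have BF: "c1 * A0 + c2 * A1 - c2 * A2 \<le> B"
    unfolding LF[symmetric] B_def by (rule set_integral_mono[OF iF iB tang])
  have key: "exp m * Estar = c1 * (1 - q) + q * (c1 * A0 + c2 * A1 - c2 * A2)"
  proof -
    have "exp m * Estar = c1 * Estar + exp m * (m * Estar)" unfolding c1_def by (simp add: algebra_simps)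
    also have "\<dots> = c1 * Estar + exp m * (\<gamma> * q * (A1 - A2))" unfolding mE ..
    also have "\<dots> = c1 * (1 - q) + q * (c1 * A0 + c2 * A1 - c2 * A2)"
      unfolding ES c2_def by (simp add: algebra_simps)
    finally show ?thesis .
  qed
  have EJge: "exp m * Estar \<le> EJ"
  proof -
    have "c1 * (1 - q) \<le> 1 - q" using mult_right_mono[OF c1le, of "1 - q"] q1 by simp
    moreover have "q * (c1 * A0 + c2 * A1 - c2 * A2) \<le> q * B" using BF q0 by simp
    ultimately show ?thesis unfolding key EJ by simp
  qed
  have mge: "\<gamma> * p1 \<le> \<gamma> * p2 + m"
  proof -
    have "m = \<gamma> * (q * A1 - q * A2) / Estar" unfolding m_def by (simp add: algebra_simps)
    also have "\<dots> = \<gamma> * (Estar * p1 - q * A2) / Estar" unfolding pr2 ..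
    also have "\<dots> \<ge> \<gamma> * (Estar * p1 - Estar * p2) / Estar"
      using pr1 g0 Ep by (intro divide_right_mono mult_left_mono) auto
    finally have "\<gamma> * (Estar * p1 - Estar * p2) / Estar \<le> m" .
    moreover have "\<gamma> * (Estar * p1 - Estar * p2) / Estar = \<gamma> * p1 - \<gamma> * p2"
      using Ep by (simp add: field_simps)
    ultimately show ?thesis by simp
  qed
  have chain1: "exp (\<gamma> * p1) * Estar \<le> exp (\<gamma> * p2 + m) * Estar"
    using mge Ep by (intro mult_right_mono) auto
  have chain2: "exp (\<gamma> * p2 + m) * Estar \<le> exp (\<gamma> * p2) * EJ"
    using EJge by (simp add: exp_add mult.assoc)
  show "exp (\<gamma> * premium (ktilde \<theta> c) q lam Is) * Estar
           \<le> exp (\<gamma> * premium (ktilde \<theta> c) q lam J) * ExpX q lam (\<lambda>x. exp (\<gamma> * (x - J x)))"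
    using chain1 chain2 unfolding p1_def p2_def EJ_def by simp
  assume hyp: "exp (\<gamma> * premium (ktilde \<theta> c) q lam J) * ExpX q lam (\<lambda>x. exp (\<gamma> * (x - J x)))
           \<le> exp (\<gamma> * premium (ktilde \<theta> c) q lam Is) * Estar"
  have h1: "exp (\<gamma> * p2) * EJ \<le> exp (\<gamma> * p1) * Estar"
    using hyp unfolding p1_def[symmetric] p2_def[symmetric] EJ_def[symmetric] .
  have h2: "exp (\<gamma> * p1) * Estar \<le> exp (\<gamma> * p2) * (exp m * Estar)"
    using chain1 by (simp add: exp_add mult.assoc)
  have "exp (\<gamma> * p2) * EJ \<le> exp (\<gamma> * p2) * (exp m * Estar)" by (rule order.trans[OF h1 h2])
  then have EJle: "EJ \<le> exp m * Estar" by simp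
  have "q * B \<le> q * (c1 * A0 + c2 * A1 - c2 * A2)"
  proof -
    have "c1 * (1 - q) \<le> 1 - q" using mult_right_mono[OF c1le, of "1 - q"] q1 by simp
    then show ?thesis using EJle unfolding key EJ by simp
  qed
  then have "B \<le> c1 * A0 + c2 * A1 - c2 * A2" using q0 by simp
  then have "(LINT x:{0<..}|lborel. w x * exp (\<gamma> * (x - J x)) - f x) = 0"
    using BF unfolding LF[symmetric] B_def by (subst set_integral_diff(2)[OF iB iF]) simp
  then have "integral\<^sup>L lborel (\<lambda>x. indicator {0<..} x *\<^sub>R (w x * exp (\<gamma> * (x - J x)) - f x)) = 0"
    unfolding set_lebesgue_integral_def .
  moreover have "integrable lborel (\<lambda>x. indicator {0<..} x *\<^sub>R (w x * exp (\<gamma> * (x - J x)) - f x))"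
    using set_integral_diff(1)[OF iB iF] unfolding set_integrable_def .
  moreover have "AE x in lborel. 0 \<le> indicator {0<..} x *\<^sub>R (w x * exp (\<gamma> * (x - J x)) - f x)"
    using tang by (intro AE_I2) (simp split: split_indicator)
  ultimately have AE0: "AE x in lborel. indicator {0<..} x *\<^sub>R (w x * exp (\<gamma> * (x - J x)) - f x) = 0"
    using integral_nonneg_eq_0_iff_AE by blast
  have AEY: "AE x in lborel. 0 < x \<longrightarrow> \<gamma> * (Is x - J x) = m"
  proof (rule AE_mp[OF AE0], intro AE_I2 impI)
    fix x :: real
    assume h: "indicator {0<..} x *\<^sub>R (w x * exp (\<gamma> * (x - J x)) - f x) = 0" and x: "0 < x"
    define Y where "Y = \<gamma> * (Is x - J x)"
    have wr: "0 < w x * rho x" unfolding w_def using lam0 rho_pos[of x] by simp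
    have fe: "f x = (w x * rho x) * (exp m * (1 + (Y - m)))"
      unfolding f_def c1_def c2_def Y_def by (simp add: algebra_simps)
    have we: "w x * exp (\<gamma> * (x - J x)) = (w x * rho x) * exp Y"
      unfolding rho_def Y_def by (simp add: mult.assoc algebra_simps flip: exp_add)
    have hx: "w x * exp (\<gamma> * (x - J x)) - f x = 0" using h x by (simp add: indicator_def)
    have "(w x * rho x) * (exp m * (1 + (Y - m))) = f x" by (rule fe[symmetric])
    also have "\<dots> = w x * exp (\<gamma> * (x - J x))" using hx by simp
    also have "\<dots> = (w x * rho x) * exp Y" by (rule we)
    finally have "(w x * rho x) * (exp m * (1 + (Y - m))) = (w x * rho x) * exp Y" .
    moreover have "w x > 0" "rho x > 0" unfolding w_def using lam0 rho_pos[of x] by auto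
    ultimately have "exp m * (1 + (Y - m)) = exp Y" by simp
    also have "exp Y = exp m * exp (Y - m)" by (simp flip: exp_add)
    finally have "exp m * (1 + (Y - m)) = exp m * exp (Y - m)" .
    then have "1 + (Y - m) = exp (Y - m)" by simp
    then have "Y - m = 0" using exp_strict[of "Y - m"] by (cases "Y - m = 0") auto
    then show "\<gamma> * (Is x - J x) = m" unfolding Y_def by simp
  qed
  have m0: "m = 0"
  proof (rule ccontr)
    assume "m \<noteq> 0"
    then have pos: "0 < \<bar>m\<bar> / \<gamma>" using g0 by simp
    obtain x where x: "0 < x" "x < \<bar>m\<bar> / \<gamma>" "0 < x \<longrightarrow> \<gamma> * (Is x - J x) = m"
      using AE_point_in_interval[OF AEY pos] by auto
    have "\<bar>Is x - J x\<bar> \<le> x" using Jb[OF x(1)] Is_nonneg[of x] Is_le[of x] x(1) by linarith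
    then have "\<bar>m\<bar> \<le> \<gamma> * x" using x(3) x(1) g0 by (auto simp: abs_mult)
    moreover have "\<gamma> * x < \<bar>m\<bar>" using x(2) g0 by (simp add: field_simps)
    ultimately show False by simp
  qed
  show "AE x in lborel. 0 < x \<longrightarrow> J x = Is x"
    using AEY unfolding m0 using g0 by (auto elim!: eventually_mono)
qed

end

lemma u_form:
  assumes du: "\<And>x. (u has_real_derivative exp (- \<gamma> * x)) (at x)" and g: "0 < \<gamma>"
  shows "\<exists>K. \<forall>y. u y = K - exp (- \<gamma> * y) / \<gamma>"
proof -
  define v where "v y = u y + exp (- \<gamma> * y) / \<gamma>" for y
  have "\<forall>x. DERIV v x :> 0"
  proof
    fix x
    have "DERIV (\<lambda>y. exp (- \<gamma> * y) / \<gamma>) x :> exp (- \<gamma> * x) * (- \<gamma>) / \<gamma>"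
      by (auto intro!: derivative_eq_intros simp: g)
    from DERIV_add[OF du this]
    have "DERIV v x :> exp (- \<gamma> * x) + exp (- \<gamma> * x) * (- \<gamma>) / \<gamma>"
      unfolding v_def .
    then show "DERIV v x :> 0" using g by simp
  qed
  then have "\<And>y. v y = v 0" by (rule DERIV_isconst_all)
  then show ?thesis unfolding v_def by (intro exI[of _ "v 0"]) (auto simp: v_def algebra_simps)
qed

lemma w_int:
  fixes lam :: real
  assumes "0 < lam"
  shows "set_integrable lborel {0<..} (\<lambda>x. lam * exp (- lam * x))"
    "(LINT x:{0<..}|lborel. lam * exp (- lam * x)) = 1"
proof -
  have i: "set_integrable lborel {0..} (\<lambda>x. lam * exp (- lam * x))"
    and v: "(LINT x:{0..}|lborel. lam * exp (- lam * x)) = 1"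
    using tail_int(1,2)[of lam lam 0] assms by auto
  show "set_integrable lborel {0<..} (\<lambda>x. lam * exp (- lam * x))"
    by (rule set_integrable_subset[OF i]) auto
  have "(LINT x:{0<..}|lborel. lam * exp (- lam * x)) = (LINT x:{0..}|lborel. lam * exp (- lam * x))"
    by (rule set_integral_cong_set) (auto intro!: AE_except_point[of 0] simp: set_borel_measurable_def)
  then show "(LINT x:{0<..}|lborel. lam * exp (- lam * x)) = 1" using v by (simp only:)
qed

lemma u_wealth:
  assumes K: "\<And>y. u y = K - exp (- \<gamma> * y) / \<gamma>" and g: "0 < \<gamma>"
  shows "u (wealthFun k w q lam J x) = K - (exp (- \<gamma> * w) * exp (\<gamma> * premium k q lam J) / \<gamma>) * exp (\<gamma> * (x - J x))"
proof -
  have "exp (- \<gamma> * wealthFun k w q lam J x) = exp (- \<gamma> * w) * exp (\<gamma> * premium k q lam J) * exp (\<gamma> * (x - J x))"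
    unfolding wealthFun_def by (simp add: algebra_simps flip: exp_add)
  then show ?thesis unfolding K by simp
qed

lemma EU_formula:
  assumes lam: "0 < lam" and g: "0 < \<gamma>" and K: "\<And>y. u y = K - exp (- \<gamma> * y) / \<gamma>" and J0: "J 0 = 0"
    and int: "set_integrable lborel {0<..} (\<lambda>x. lam * exp (- lam * x) * exp (\<gamma> * (x - J x)))"
  shows "integrableX q lam (\<lambda>x. u (wealthFun k w q lam J x))"
    "EU u k w q lam J = K - exp (- \<gamma> * w) / \<gamma> * (exp (\<gamma> * premium k q lam J) * ExpX q lam (\<lambda>x. exp (\<gamma> * (x - J x))))"
proof -
  define C where "C = exp (- \<gamma> * w) * exp (\<gamma> * premium k q lam J) / \<gamma>"
  have e: "(\<lambda>x. lam * exp (- lam * x) * u (wealthFun k w q lam J x))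
      = (\<lambda>x. K * (lam * exp (- lam * x)) - C * (lam * exp (- lam * x) * exp (\<gamma> * (x - J x))))"
    unfolding u_wealth[OF K g] C_def by (auto simp: fun_eq_iff algebra_simps)
  note wi = w_int[OF lam]
  have i1: "set_integrable lborel {0<..} (\<lambda>x. K * (lam * exp (- lam * x)))" using wi(1) by auto
  have i2: "set_integrable lborel {0<..} (\<lambda>x. C * (lam * exp (- lam * x) * exp (\<gamma> * (x - J x))))" using int by auto
  show "integrableX q lam (\<lambda>x. u (wealthFun k w q lam J x))"
    unfolding integrableX_def e by (rule set_integral_diff(1)[OF i1 i2])
  define L1 where "L1 = (LINT x:{0<..}|lborel. lam * exp (- lam * x) * u (wealthFun k w q lam J x))"
  define L2 where "L2 = (LINT x:{0<..}|lborel. lam * exp (- lam * x) * exp (\<gamma> * (x - J x)))"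
  have Lu: "L1 = K - C * L2"
  proof -
    have "L1 = (LINT x:{0<..}|lborel. K * (lam * exp (- lam * x))) - (LINT x:{0<..}|lborel. C * (lam * exp (- lam * x) * exp (\<gamma> * (x - J x))))"
      unfolding L1_def e by (rule set_integral_diff(2)[OF i1 i2])
    also have "\<dots> = K * (LINT x:{0<..}|lborel. lam * exp (- lam * x)) - C * L2"
      unfolding L2_def by (simp only: set_integral_mult_right)
    finally show ?thesis unfolding wi(2) by simp
  qed
  have u0: "u (wealthFun k w q lam J 0) = K - C"
    unfolding u_wealth[OF K g] J0 C_def by simp
  have E1: "EU u k w q lam J = (1 - q) * u (wealthFun k w q lam J 0) + q * L1"
    unfolding EU_def ExpX_def L1_def ..
  have E2: "ExpX q lam (\<lambda>x. exp (\<gamma> * (x - J x))) = (1 - q) + q * L2"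
    unfolding ExpX_def L2_def J0 by simp
  show "EU u k w q lam J = K - exp (- \<gamma> * w) / \<gamma> * (exp (\<gamma> * premium k q lam J) * ExpX q lam (\<lambda>x. exp (\<gamma> * (x - J x))))"
  proof -
    have Ceq: "exp (- \<gamma> * w) / \<gamma> * (exp (\<gamma> * premium k q lam J) * ((1 - q) + q * L2)) = C * ((1 - q) + q * L2)"
      unfolding C_def by simp
    show ?thesis unfolding E1 E2 Lu u0 Ceq by (simp add: algebra_simps)
  qed
qed

lemma EU_int_rev:
  assumes lam: "0 < lam" and g: "0 < \<gamma>" and K: "\<And>y. u y = K - exp (- \<gamma> * y) / \<gamma>"
    and int: "integrableX q lam (\<lambda>x. u (wealthFun k w q lam J x))"
  shows "set_integrable lborel {0<..} (\<lambda>x. lam * exp (- lam * x) * exp (\<gamma> * (x - J x)))"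
proof -
  define C where "C = exp (- \<gamma> * w) * exp (\<gamma> * premium k q lam J) / \<gamma>"
  have C0: "C > 0" unfolding C_def using g by simp
  have e: "(\<lambda>x. lam * exp (- lam * x) * exp (\<gamma> * (x - J x)))
      = (\<lambda>x. (K * (lam * exp (- lam * x)) - lam * exp (- lam * x) * u (wealthFun k w q lam J x)) / C)"
    unfolding u_wealth[OF K g] C_def[symmetric] using C0 by (auto simp: fun_eq_iff field_simps)
  have i1: "set_integrable lborel {0<..} (\<lambda>x. K * (lam * exp (- lam * x)))" using w_int(1)[OF lam] by auto
  show ?thesis unfolding e
    by (intro set_integrable_divide set_integral_diff(1)[OF i1]) (use int in \<open>simp add: integrableX_def\<close>)
qed

definition ext0 :: "(real \<Rightarrow> real) \<Rightarrow> real \<Rightarrow> real" where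
  "ext0 J x = J (max x 0)"

lemma Ic_D:
  assumes "J \<in> Ic"
  shows "J 0 = 0" "\<And>x. 0 \<le> x \<Longrightarrow> 0 \<le> J x \<and> J x \<le> x"
    "\<And>x y. 0 \<le> y \<Longrightarrow> y \<le> x \<Longrightarrow> 0 \<le> J x - J y \<and> J x - J y \<le> x - y"
  using assms unfolding Ic_def by (auto intro: antisym)

lemma ext0_good:
  assumes J: "J \<in> Ic"
  shows "goodJ (ext0 J)"
proof -
  note D = Ic_D[OF J]
  have lip: "dist (ext0 J x) (ext0 J y) \<le> 1 * dist x y" for x y
  proof -
    have a: "\<bar>J a - J b\<bar> \<le> \<bar>a - b\<bar>" if "0 \<le> a" "0 \<le> b" for a b
    proof (cases "b \<le> a")
      case True then show ?thesis using D(3)[OF that(2) True] by simp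
    next
      case False then show ?thesis using D(3)[OF that(1), of b] by simp
    qed
    have "\<bar>J (max x 0) - J (max y 0)\<bar> \<le> \<bar>max x 0 - max y 0\<bar>" by (rule a) auto
    also have "\<dots> \<le> \<bar>x - y\<bar>" unfolding max_def by (auto simp: abs_if)
    finally show ?thesis unfolding ext0_def dist_real_def by simp
  qed
  have "1-lipschitz_on UNIV (ext0 J)" by (rule lipschitz_onI) (use lip in auto)
  then have "continuous_on UNIV (ext0 J)" by (rule lipschitz_on_continuous_on)
  moreover have "\<forall>x\<ge>0. 0 \<le> ext0 J x \<and> ext0 J x \<le> x" unfolding ext0_def using D(2) by simp
  moreover have "\<forall>x y. 0 \<le> y \<and> y \<le> x \<longrightarrow> ext0 J y \<le> ext0 J x" unfolding ext0_def using D(3) by force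
  ultimately show ?thesis unfolding goodJ_def by blast
qed

lemma ExpX_cong: "(\<And>x. 0 \<le> x \<Longrightarrow> f x = g x) \<Longrightarrow> ExpX q lam f = ExpX q lam g"
  unfolding ExpX_def by (subst set_lebesgue_integral_cong[where g="\<lambda>x. lam * exp (- lam * x) * g x"]) auto

lemma integrableX_cong: "(\<And>x. 0 \<le> x \<Longrightarrow> f x = g x) \<Longrightarrow> integrableX q lam f \<longleftrightarrow> integrableX q lam g"
proof -
  assume h: "\<And>x. 0 \<le> x \<Longrightarrow> f x = g x"
  have "(\<lambda>x. indicator {0<..} x *\<^sub>R (lam * exp (- lam * x) * f x)) = (\<lambda>x. indicator {0<..} x *\<^sub>R (lam * exp (- lam * x) * g x))"
    using h by (auto simp: fun_eq_iff split: split_indicator)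
  then show ?thesis unfolding integrableX_def set_integrable_def by simp
qed

lemma survI_ext0: "survI q lam (ext0 J) t = survI q lam J t"
  unfolding survI_def by (rule ExpX_cong) (simp add: ext0_def)

lemma premium_ext0: "premium k q lam (ext0 J) = premium k q lam J"
  unfolding premium_def survI_ext0 ..

lemma wealth_ext0: "0 \<le> x \<Longrightarrow> wealthFun k w q lam (ext0 J) x = wealthFun k w q lam J x"
  unfolding wealthFun_def premium_ext0 by (simp add: ext0_def)

lemma EU_ext0: "EU u k w q lam (ext0 J) = EU u k w q lam J"
  unfolding EU_def by (rule ExpX_cong) (simp add: wealth_ext0)

lemma integrableX_ext0: "integrableX q lam (\<lambda>x. u (wealthFun k w q lam (ext0 J) x)) \<longleftrightarrow> integrableX q lam (\<lambda>x. u (wealthFun k w q lam J x))"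
  by (rule integrableX_cong) (simp add: wealth_ext0)

lemma opt_result:
  assumes q0: "0 < q" and q1: "q \<le> 1" and lam0: "0 < lam" and g0: "0 < \<gamma>" and c0: "0 < c" and c1: "c < 1"
    and th0: "0 \<le> \<theta>" and lc: "lam * (1 - c) < \<gamma>" and d0: "0 \<le> d" and foc: "FOC q lam \<gamma> c \<theta> d"
    and du: "\<And>x. (u has_real_derivative exp (- \<gamma> * x)) (at x)"
  shows "optimalI u (ktilde \<theta> c) w q lam (\<lambda>x. (1 - lam * (1 - c) / \<gamma>) * max (x - d) 0)"
    and "\<forall>I. optimalI u (ktilde \<theta> c) w q lam I \<longrightarrow> (AE x in lborel. x > 0 \<longrightarrow> I x = (1 - lam * (1 - c) / \<gamma>) * max (x - d) 0)"
proof -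
  interpret model q lam \<gamma> c \<theta> d by unfold_locales (rule assms)+
  have IsE: "(\<lambda>x. (1 - lam * (1 - c) / \<gamma>) * max (x - d) 0) = Is" unfolding Is_def aa_def by (simp add: fun_eq_iff)
  obtain K where K: "\<And>y. u y = K - exp (- \<gamma> * y) / \<gamma>" using u_form[OF du g0] by blast
  have Is_Ic: "Is \<in> Ic"
  proof -
    have "0 \<le> Is x - Is y \<and> Is x - Is y \<le> x - y" if "0 \<le> y" "y \<le> x" for x y
    proof -
      have m: "0 \<le> max (x - d) 0 - max (y - d) 0" "max (x - d) 0 - max (y - d) 0 \<le> x - y"
        using that by (auto simp: max_def)
      have "Is x - Is y = aa * (max (x - d) 0 - max (y - d) 0)" unfolding Is_def by (simp add: algebra_simps)
      moreover have "aa * (max (x - d) 0 - max (y - d) 0) \<le> 1 * (x - y)"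
        using m aa_le1 aa_pos by (intro mult_mono) auto
      moreover have "0 \<le> aa * (max (x - d) 0 - max (y - d) 0)" using m aa_pos by simp
      ultimately show ?thesis by simp
    qed
    then show ?thesis unfolding Ic_def using Is_nonneg Is_le by auto
  qed
  have intIs: "set_integrable lborel {0<..} (\<lambda>x. lam * exp (- lam * x) * exp (\<gamma> * (x - Is x)))"
    using gw_int unfolding gw_def rho_def .
  have EstarE: "ExpX q lam (\<lambda>x. exp (\<gamma> * (x - Is x))) = Estar" unfolding Estar_def rho_def ..
  note EUIs = EU_formula[OF lam0 g0 K Is_0 intIs, where k="ktilde \<theta> c" and w=w and q=q]
  define C0 where "C0 = exp (- \<gamma> * w) / \<gamma>"
  have C0p: "C0 > 0" unfolding C0_def using g0 by simp
  have EU_Is: "EU u (ktilde \<theta> c) w q lam Is = K - C0 * (exp (\<gamma> * premium (ktilde \<theta> c) q lam Is) * Estar)"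
    using EUIs(2) unfolding EstarE C0_def .
  have int_Is: "integrableX q lam (\<lambda>x. u (wealthFun (ktilde \<theta> c) w q lam Is x))" by (rule EUIs(1))
  have EU_J: "EU u (ktilde \<theta> c) w q lam J = K - C0 * (exp (\<gamma> * premium (ktilde \<theta> c) q lam (ext0 J)) * ExpX q lam (\<lambda>x. exp (\<gamma> * (x - ext0 J x))))"
    and intJ': "set_integrable lborel {0<..} (\<lambda>x. lam * exp (- lam * x) * exp (\<gamma> * (x - ext0 J x)))"
    if J: "J \<in> Ic" and iJ: "integrableX q lam (\<lambda>x. u (wealthFun (ktilde \<theta> c) w q lam J x))" for J
  proof -
    have iJ': "integrableX q lam (\<lambda>x. u (wealthFun (ktilde \<theta> c) w q lam (ext0 J) x))"
      using iJ integrableX_ext0 by blast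
    show i: "set_integrable lborel {0<..} (\<lambda>x. lam * exp (- lam * x) * exp (\<gamma> * (x - ext0 J x)))"
      by (rule EU_int_rev[OF lam0 g0 K iJ'])
    have "ext0 J 0 = 0" unfolding ext0_def using Ic_D(1)[OF J] by simp
    from EU_formula(2)[OF lam0 g0 K this i, where k="ktilde \<theta> c" and w=w and q=q]
    show "EU u (ktilde \<theta> c) w q lam J = K - C0 * (exp (\<gamma> * premium (ktilde \<theta> c) q lam (ext0 J)) * ExpX q lam (\<lambda>x. exp (\<gamma> * (x - ext0 J x))))"
      unfolding EU_ext0 C0_def .
  qed
  show "optimalI u (ktilde \<theta> c) w q lam (\<lambda>x. (1 - lam * (1 - c) / \<gamma>) * max (x - d) 0)"
    unfolding IsE optimalI_def
  proof (intro conjI ballI impI Is_Ic int_Is)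
    fix J assume J: "J \<in> Ic" and iJ: "integrableX q lam (\<lambda>x. u (wealthFun (ktilde \<theta> c) w q lam J x))"
    have "exp (\<gamma> * premium (ktilde \<theta> c) q lam Is) * Estar
        \<le> exp (\<gamma> * premium (ktilde \<theta> c) q lam (ext0 J)) * ExpX q lam (\<lambda>x. exp (\<gamma> * (x - ext0 J x)))"
      by (rule main_ineq(1)[OF ext0_good[OF J] intJ'[OF J iJ]])
    then show "EU u (ktilde \<theta> c) w q lam J \<le> EU u (ktilde \<theta> c) w q lam Is"
      unfolding EU_J[OF J iJ] EU_Is using C0p by simp
  qed
  show "\<forall>I. optimalI u (ktilde \<theta> c) w q lam I \<longrightarrow> (AE x in lborel. x > 0 \<longrightarrow> I x = (1 - lam * (1 - c) / \<gamma>) * max (x - d) 0)"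
    unfolding IsE
  proof (intro allI impI)
    fix J assume o: "optimalI u (ktilde \<theta> c) w q lam J"
    then have J: "J \<in> Ic" and iJ: "integrableX q lam (\<lambda>x. u (wealthFun (ktilde \<theta> c) w q lam J x))"
      and le: "EU u (ktilde \<theta> c) w q lam Is \<le> EU u (ktilde \<theta> c) w q lam J"
      unfolding optimalI_def using Is_Ic int_Is by auto
    have "exp (\<gamma> * premium (ktilde \<theta> c) q lam (ext0 J)) * ExpX q lam (\<lambda>x. exp (\<gamma> * (x - ext0 J x)))
        \<le> exp (\<gamma> * premium (ktilde \<theta> c) q lam Is) * Estar"
      using le unfolding EU_J[OF J iJ] EU_Is using C0p by simp
    from main_ineq(2)[OF ext0_good[OF J] intJ'[OF J iJ] this]
    show "AE x in lborel. 0 < x \<longrightarrow> J x = (1 - lam * (1 - c) / \<gamma>) * max (x - d) 0"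
      by (auto simp: ext0_def Is_def aa_def elim!: eventually_mono)
  qed
qed

theorem proposition4p2:
  fixes q lam \<gamma> c \<theta> w :: real and u :: "real \<Rightarrow> real"
  assumes "0 < q" "q \<le> 1" "0 < lam" "0 < \<gamma>" "0 < c" "c < 1" "0 \<le> \<theta>"
    and "\<And>x. (u has_real_derivative exp (- \<gamma> * x)) (at x)"
    and "lam * (1 - c) < \<gamma>"
  shows "\<exists>d. d \<ge> 0 \<and> dEq q lam \<gamma> c \<theta> d \<and>
           (\<forall>d'. d' \<ge> 0 \<and> dEq q lam \<gamma> c \<theta> d' \<longrightarrow> d' = d) \<and>
           optimalI u (ktilde \<theta> c) w q lam (\<lambda>x. (1 - lam * (1 - c) / \<gamma>) * max (x - d) 0) \<and>
           (\<forall>I. optimalI u (ktilde \<theta> c) w q lam I \<longrightarrow>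
              (AE x in lborel. x > 0 \<longrightarrow> I x = (1 - lam * (1 - c) / \<gamma>) * max (x - d) 0)) \<and>
           (d > 0 \<longleftrightarrow> (q < 1 \<or> \<theta> > 0))"
proof -
  obtain d where d0: "d \<ge> 0" and Pd: "Psi q lam \<gamma> c \<theta> d = 0"
    using Psi_root[OF assms(1,2,3,5,6,7,9)] by blast
  have focd: "FOC q lam \<gamma> c \<theta> d" using Pd Psi_FOC by blast
  have dEqd: "dEq q lam \<gamma> c \<theta> d" using focd dEq_iff_FOC[OF assms(5)] by blast
  note R = opt_result[OF assms(1,2,3,4,5,6,7,9) d0 focd assms(8), of w]
  define aa where "aa = 1 - lam * (1 - c) / \<gamma>"
  have aa0: "aa > 0" unfolding aa_def using assms(4,9) by (simp add: field_simps)
  have uniq: "\<forall>d'. d' \<ge> 0 \<and> dEq q lam \<gamma> c \<theta> d' \<longrightarrow> d' = d"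
  proof (intro allI impI)
    fix d' assume h: "d' \<ge> 0 \<and> dEq q lam \<gamma> c \<theta> d'"
    then have focd': "FOC q lam \<gamma> c \<theta> d'" using dEq_iff_FOC[OF assms(5)] by blast
    note R' = opt_result[OF assms(1,2,3,4,5,6,7,9) _ focd' assms(8), of w]
    have AE: "AE x in lborel. x > 0 \<longrightarrow> aa * max (x - d') 0 = aa * max (x - d) 0"
      using R(2) R'(1) h unfolding aa_def by blast
    show "d' = d"
    proof (rule ccontr)
      assume ne: "d' \<noteq> d"
      show False
      proof (cases "d < d'")
        case True
        obtain x where x: "d < x" "x < d'" "x > 0 \<longrightarrow> aa * max (x - d') 0 = aa * max (x - d) 0"
          using AE_point_in_interval[OF AE True] by auto
        then show False using d0 aa0 by (simp add: max_def split: if_splits)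
      next
        case False
        then have lt: "d' < d" using ne by simp
        obtain x where x: "d' < x" "x < d" "x > 0 \<longrightarrow> aa * max (x - d') 0 = aa * max (x - d) 0"
          using AE_point_in_interval[OF AE lt] by auto
        then show False using h aa0 by (simp add: max_def split: if_splits)
      qed
    qed
  qed
  have pos: "d > 0 \<longleftrightarrow> (q < 1 \<or> \<theta> > 0)"
  proof
    assume dp: "d > 0"
    show "q < 1 \<or> \<theta> > 0"
    proof (rule ccontr)
      assume "\<not> (q < 1 \<or> \<theta> > 0)"
      then have "q = 1 \<and> \<theta> = 0" using assms(2,7) by simp
      then have "Psi q lam \<gamma> c \<theta> 0 = 0" using Psi0(2)[OF assms(1,2,5,6,7)] by simp
      then have "dEq q lam \<gamma> c \<theta> 0" using Psi_FOC dEq_iff_FOC[OF assms(5)] by blast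
      then have "0 = d" using uniq by auto
      then show False using dp by simp
    qed
  next
    assume "q < 1 \<or> \<theta> > 0"
    then have "Psi q lam \<gamma> c \<theta> 0 \<noteq> 0" using Psi0(2)[OF assms(1,2,5,6,7)] by auto
    then have "d \<noteq> 0" using Pd by auto
    then show "d > 0" using d0 by simp
  qed
  show ?thesis using d0 dEqd uniq R pos by blast
qed

end
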